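(* Let $f,g:\mathbb{R}^n\to[0,+\infty)$ and $h_1,h_2:\mathbb{R}^n\to\mathbb{R}$, let $C\subseteq\mathbb{R}^n$ be closed and convex, $\Omega:=\{x:g(x)\neq0\}$, $C\cap\Omega\neq\emptyset$, and assume: $f$ is convex; $g$ is differentiable with locally Lipschitz gradient; $h_1$ is differentiable with locally Lipschitz gradient; $h_2$ is convex. Let $F$, $H$ and Algorithm 1 be as in the context, with $x^0\in\mathrm{dom}F$, assume $\mathcal{X}_0:=\{x\in\mathrm{dom}F:F(x)\le F(x^0)\}$ is compact, and let $\{(x^k,z^k,c_k):k\in\mathbb{N}\}$ be generated by Algorithm 1. Then: (i) there exists $a>0$ such that $H(x^{k+1},z^k,c_{k+1})+a\|x^{k+1}-x^k\|_2^2\le H(x^k,z^{k-1},c_k)$ for all integers $k\ge1$; (ii) there exists $b>0$ such that $\mathrm{dist}\big(0,\partial H(x^{k+1},z^k,c_{k+1})\big)\le b\|x^{k+1}-x^k\|_2$ for all $k\in\mathbb{N}$.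
   Context: $F(x)=f^2(x)/g(x)+h_1(x)-h_2(x)$ if $x\in\Omega\cap C$, $F(x)=+\infty$ otherwise. $\iota_C$ is the indicator of $C$, $h_2^\star$ the convex conjugate of $h_2$, $\mathrm{prox}_\varphi(y)=\arg\min_x\{\varphi(x)+\frac12\|x-y\|_2^2\}$. $H:\mathbb{R}^n\times\mathbb{R}^n\times\mathbb{R}\to(-\infty,+\infty]$, $H(x,z,c)=2cf(x)+\iota_C(x)-c^2g(x)+h_1(x)+h_2^\star(z)-\langle x,z\rangle$; $\partial H$ is its limiting subdifferential on $\mathbb{R}^{2n+1}$, and $\partial h_2$ is the convex subdifferential. Algorithm 1: given $x^0\in\mathrm{dom}F$, $0<\underline{\alpha}<\overline{\alpha}$, $\sigma>0$, $0<r<1$, for $k=0,1,2,\dots$: (Step 1) compute $c_k=f(x^k)/g(x^k)$, choose $z^k\in\partial h_2(x^k)$, set $\alpha:=\widetilde{\alpha}_k\in[\underline{\alpha},\overline{\alpha}]$; (Step 2) compute $\widehat{x}^k\in\mathrm{prox}_{2\alpha c_kf+\iota_C}\big(x^k-\alpha(\nabla h_1(x^k)-c_k^2\nabla g(x^k)-z^k)\big)$; if $\widehat{x}^k\in\Omega$ and $H(\widehat{x}^k,z^k,f(\widehat{x}^k)/g(\widehat{x}^k))+\frac{\sigma}{2}\|\widehat{x}^k-x^k\|_2^2\le F(x^k)$, set $x^{k+1}=\widehat{x}^k$, $\alpha_k:=\alpha$ and go to the next $k$; otherwise set $\alpha:=r\alpha$ and repeat Step 2. *)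

theory Defs
  imports "HOL-Analysis.Analysis"
begin

definition ind :: "'a set \<Rightarrow> 'a \<Rightarrow> ereal" where
  "ind C x = (if x \<in> C then 0 else \<infinity>)"

definition conj_fun :: "('a::real_inner \<Rightarrow> real) \<Rightarrow> 'a \<Rightarrow> ereal" where
  "conj_fun h z = (SUP x. ereal (inner x z - h x))"

definition cvx_subdiff :: "('a::real_inner \<Rightarrow> real) \<Rightarrow> 'a \<Rightarrow> 'a set" where
  "cvx_subdiff h x = {z. \<forall>y. h y \<ge> h x + inner z (y - x)}"

definition frechet_subdiff :: "('a::real_inner \<Rightarrow> ereal) \<Rightarrow> 'a \<Rightarrow> 'a set" where
  "frechet_subdiff \<phi> x =
     (if \<bar>\<phi> x\<bar> = \<infinity> then {} else
      {v. \<forall>e>0. \<exists>d>0. \<forall>y. norm (y - x) < d \<longrightarrow>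
            ereal (real_of_ereal (\<phi> x) + inner v (y - x) - e * norm (y - x)) \<le> \<phi> y})"

definition limiting_subdiff :: "('a::real_inner \<Rightarrow> ereal) \<Rightarrow> 'a \<Rightarrow> 'a set" where
  "limiting_subdiff \<phi> x =
     (if \<bar>\<phi> x\<bar> = \<infinity> then {} else
      {v. \<exists>xs vs. xs \<longlonglongrightarrow> x \<and> (\<lambda>k. \<phi> (xs k)) \<longlonglongrightarrow> \<phi> x \<and>
            (\<forall>k. vs k \<in> frechet_subdiff \<phi> (xs k)) \<and> vs \<longlonglongrightarrow> v})"

definition prox :: "('a::real_inner \<Rightarrow> ereal) \<Rightarrow> 'a \<Rightarrow> 'a set" where
  "prox \<phi> y = {x. \<forall>u. \<phi> x + ereal ((norm (x - y))\<^sup>2 / 2) \<le> \<phi> u + ereal ((norm (u - y))\<^sup>2 / 2)}"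

definition Fobj :: "('a \<Rightarrow> real) \<Rightarrow> ('a \<Rightarrow> real) \<Rightarrow> ('a \<Rightarrow> real) \<Rightarrow> ('a \<Rightarrow> real) \<Rightarrow> 'a set \<Rightarrow> 'a \<Rightarrow> ereal" where
  "Fobj f g h1 h2 C x =
     (if x \<in> {y. g y \<noteq> 0} \<inter> C then ereal ((f x)\<^sup>2 / g x + h1 x - h2 x) else \<infinity>)"

definition Hfun :: "('a::real_inner \<Rightarrow> real) \<Rightarrow> ('a \<Rightarrow> real) \<Rightarrow> ('a \<Rightarrow> real) \<Rightarrow> ('a \<Rightarrow> real) \<Rightarrow> 'a set
                     \<Rightarrow> 'a \<times> 'a \<times> real \<Rightarrow> ereal" where
  "Hfun f g h1 h2 C = (\<lambda>(x, z, c).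
     ereal (2 * c * f x) + ind C x - ereal (c\<^sup>2 * g x) + ereal (h1 x) + conj_fun h2 z - ereal (inner x z))"

text \<open>Acceptance test of the line search in Step 2 of Algorithm 1.\<close>
definition accept :: "('a::real_inner \<Rightarrow> real) \<Rightarrow> ('a \<Rightarrow> real) \<Rightarrow> ('a \<Rightarrow> real) \<Rightarrow> ('a \<Rightarrow> real) \<Rightarrow> 'a set
                      \<Rightarrow> real \<Rightarrow> 'a \<Rightarrow> 'a \<Rightarrow> 'a \<Rightarrow> bool" where
  "accept f g h1 h2 C \<sigma> xk zk xh \<longleftrightarrow>
     g xh \<noteq> 0 \<and>
     Hfun f g h1 h2 C (xh, zk, f xh / g xh) + ereal (\<sigma> / 2 * (norm (xh - xk))\<^sup>2) \<le> Fobj f g h1 h2 C xk"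

definition trial_set :: "('a::real_inner \<Rightarrow> real) \<Rightarrow> ('a \<Rightarrow> real) \<Rightarrow> 'a set \<Rightarrow> ('a \<Rightarrow> 'a) \<Rightarrow> ('a \<Rightarrow> 'a)
                         \<Rightarrow> real \<Rightarrow> 'a \<Rightarrow> 'a \<Rightarrow> real \<Rightarrow> 'a set" where
  "trial_set f g C dg dh1 ck xk zk \<alpha> =
     prox (\<lambda>u. ereal (2 * \<alpha> * ck * f u) + ind C u) (xk - \<alpha> *\<^sub>R (dh1 xk - ck\<^sup>2 *\<^sub>R dg xk - zk))"

text \<open>One iteration of Algorithm 1: from x^k (with c_k, z^k, initial step atil) to x^(k+1) via
  backtracking; xh i is the point computed at the i-th trial (step size r^i * atil), trials
  0..j-1 are rejected and trial j is accepted.\<close>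
definition alg_step :: "('a::real_inner \<Rightarrow> real) \<Rightarrow> ('a \<Rightarrow> real) \<Rightarrow> ('a \<Rightarrow> real) \<Rightarrow> ('a \<Rightarrow> real) \<Rightarrow> 'a set
                        \<Rightarrow> ('a \<Rightarrow> 'a) \<Rightarrow> ('a \<Rightarrow> 'a) \<Rightarrow> real \<Rightarrow> real
                        \<Rightarrow> 'a \<Rightarrow> real \<Rightarrow> 'a \<Rightarrow> real \<Rightarrow> 'a \<Rightarrow> bool" where
  "alg_step f g h1 h2 C dg dh1 \<sigma> r xk ck zk atil xnext \<longleftrightarrow>
     (\<exists>j::nat. \<exists>xh::nat \<Rightarrow> 'a.
        (\<forall>i\<le>j. xh i \<in> trial_set f g C dg dh1 ck xk zk (r ^ i * atil)) \<and>
        (\<forall>i<j. \<not> accept f g h1 h2 C \<sigma> xk zk (xh i)) \<and>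
        accept f g h1 h2 C \<sigma> xk zk (xh j) \<and>
        xnext = xh j)"

end

theory Submission
  imports Defs
begin

lemma conj_ge: "conj_fun h z \<ge> ereal (inner x z - h x)"
  unfolding conj_fun_def by (rule SUP_upper) auto

lemma conj_eq:
  assumes "z \<in> cvx_subdiff h x"
  shows "conj_fun h z = ereal (inner x z - h x)"
proof (rule antisym)
  show "conj_fun h z \<le> ereal (inner x z - h x)"
    unfolding conj_fun_def
  proof (rule SUP_least)
    fix y
    have "h y \<ge> h x + inner z (y - x)" using assms unfolding cvx_subdiff_def by auto
    then show "ereal (inner y z - h y) \<le> ereal (inner x z - h x)"
      by (simp add: inner_diff_right inner_commute)
  qed
qed (rule conj_ge)

lemma H_in:
  assumes "x \<in> C"
  shows "Hfun f g h1 h2 C (x, z, c) = ereal (2*c*f x - c\<^sup>2 * g x + h1 x - inner x z) + conj_fun h2 z"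
proof -
  have ne: "conj_fun h2 z \<noteq> -\<infinity>" using conj_ge[where h=h2 and z=z and x=0] by auto
  show ?thesis using assms ne unfolding Hfun_def ind_def
    by (cases "conj_fun h2 z") (simp_all add: algebra_simps)
qed

lemma H_out:
  assumes "x \<notin> C"
  shows "Hfun f g h1 h2 C (x, z, c) = \<infinity>"
proof -
  have ne: "conj_fun h2 z \<noteq> -\<infinity>" using conj_ge[where h=h2 and z=z and x=0] by auto
  show ?thesis using assms ne unfolding Hfun_def ind_def
    by (cases "conj_fun h2 z") simp_all
qed

lemma sep_subgrad:
  fixes \<phi> :: "'a::euclidean_space \<Rightarrow> real"
  assumes cvx: "convex_on UNIV \<phi>" and C: "convex C" and xh: "xh \<in> C"
    and mn: "\<And>u. u \<in> C \<Longrightarrow> \<phi> xh \<le> \<phi> u"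
  shows "\<exists>a. (\<forall>y. \<phi> y \<ge> \<phi> xh + inner a (y - xh)) \<and> (\<forall>u\<in>C. inner a (u - xh) \<ge> 0)"
proof -
  define A where "A = epigraph UNIV (\<lambda>y. \<phi> y - \<phi> xh)"
  define B where "B = C \<times> {..<(0::real)}"
  have cA: "convex A" unfolding A_def convex_epigraph
    using convex_on_diff[OF cvx, of "\<lambda>_. \<phi> xh"] by (simp add: concave_on_const)
  have cB: "convex B" unfolding B_def by (intro convex_Times C) auto
  have "(xh, 0) \<in> A" unfolding A_def mem_epigraph by simp
  then have nA: "A \<noteq> {}" by auto
  have nB: "B \<noteq> {}" unfolding B_def using xh by auto
  have dj: "A \<inter> B = {}"
  proof (rule ccontr)
    assume "A \<inter> B \<noteq> {}"
    then obtain y t where "(y,t) \<in> A" "(y,t) \<in> B" by auto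
    then show False unfolding A_def B_def mem_epigraph using mn[of y] by auto
  qed
  obtain p b where p: "p \<noteq> 0" and pA: "\<forall>x\<in>A. inner p x \<le> b" and pB: "\<forall>x\<in>B. inner p x \<ge> b"
    using separating_hyperplane_sets[OF cA cB nA nB dj] by blast
  obtain a1 \<beta> where pe: "p = (a1, \<beta>)" by (cases p)
  have A1: "inner a1 y + \<beta> * (\<phi> y - \<phi> xh + s) \<le> b" if "s \<ge> 0" for y s
  proof -
    have "(y, \<phi> y - \<phi> xh + s) \<in> A" unfolding A_def mem_epigraph using that by auto
    then show ?thesis using pA pe by force
  qed
  have B1: "inner a1 u + \<beta> * t \<ge> b" if "u \<in> C" "t < 0" for u t
  proof -
    have "(u, t) \<in> B" unfolding B_def using that by auto
    then show ?thesis using pB pe by force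
  qed
  have b0: "inner a1 xh \<le> b" using A1[of 0 xh] by simp
  have bneg: "\<beta> \<le> 0"
  proof (rule ccontr)
    assume "\<not> \<beta> \<le> 0"
    then have bp: "\<beta> > 0" by simp
    define s where "s = (b - inner a1 xh + 1) / \<beta>"
    have "s \<ge> 0" unfolding s_def using b0 bp by auto
    from A1[OF this, of xh] have "inner a1 xh + \<beta> * s \<le> b" by simp
    moreover have "\<beta> * s = b - inner a1 xh + 1" unfolding s_def using bp by simp
    ultimately show False by simp
  qed
  have bnz: "\<beta> \<noteq> 0"
  proof
    assume b0': "\<beta> = 0"
    then have a1nz: "a1 \<noteq> 0" using p pe by (auto simp: zero_prod_def)
    define y where "y = xh + ((b - inner a1 xh + 1) / (inner a1 a1)) *\<^sub>R a1"
    have "inner a1 a1 > 0" using a1nz by simp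
    then have "inner a1 y = b + 1" unfolding y_def by (simp add: inner_add_right)
    moreover have "inner a1 y \<le> b" using A1[of 0 y] b0' by simp
    ultimately show False by simp
  qed
  have bl: "\<beta> < 0" using bneg bnz by simp
  have Bu: "inner a1 u \<ge> b" if "u \<in> C" for u
  proof (rule ccontr)
    assume "\<not> inner a1 u \<ge> b"
    then have lt: "inner a1 u < b" by simp
    define t where "t = (b - inner a1 u) / (2 * \<beta>)"
    have "t < 0" unfolding t_def using lt bl by (simp add: divide_pos_neg)
    from B1[OF that this] have "inner a1 u + \<beta> * t \<ge> b" .
    moreover have "\<beta> * t = (b - inner a1 u) / 2" unfolding t_def using bl by simp
    ultimately have "b \<le> inner a1 u + (b - inner a1 u) / 2" by simp
    then show False using lt by (simp add: field_simps)
  qed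
  have beq: "b = inner a1 xh" using Bu[OF xh] b0 by simp
  define a where "a = (- 1 / \<beta>) *\<^sub>R a1"
  have "\<phi> y \<ge> \<phi> xh + inner a (y - xh)" for y
  proof -
    have "inner a1 y + \<beta> * (\<phi> y - \<phi> xh) \<le> inner a1 xh" using A1[of 0 y] beq by simp
    then have "\<beta> * (\<phi> y - \<phi> xh) \<le> - inner a1 (y - xh)" by (simp add: inner_diff_right)
    then have "\<phi> y - \<phi> xh \<ge> (- inner a1 (y - xh)) / \<beta>"
      by (subst neg_divide_le_eq[OF bl]) (simp add: mult.commute)
    moreover have "inner a (y - xh) = (- inner a1 (y - xh)) / \<beta>" unfolding a_def by simp
    ultimately show ?thesis by simp
  qed
  moreover have "inner a (u - xh) \<ge> 0" if "u \<in> C" for u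
  proof -
    have "inner a1 (u - xh) \<ge> 0" using Bu[OF that] beq by (simp add: inner_diff_right)
    moreover have "inner a (u - xh) = (- 1 / \<beta>) * inner a1 (u - xh)" unfolding a_def by simp
    moreover have "- 1 / \<beta> > 0" using bl by simp
    ultimately show ?thesis by (metis mult_nonneg_nonneg less_imp_le)
  qed
  ultimately show ?thesis by blast
qed

lemma ct_lemma:
  fixes \<psi> :: "'a::euclidean_space \<Rightarrow> real"
  assumes cvx: "convex_on UNIV \<psi>" and C: "convex C" and xh: "xh \<in> C" and M: "M \<ge> 0"
    and H: "\<And>u. u \<in> C \<Longrightarrow> \<psi> u - \<psi> xh \<ge> inner w (u - xh) - M * (norm (u - xh))\<^sup>2"
    and u: "u \<in> C"
  shows "\<psi> u - \<psi> xh \<ge> inner w (u - xh)"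
proof (rule ccontr)
  assume neg: "\<not> \<psi> u - \<psi> xh \<ge> inner w (u - xh)"
  define D where "D = inner w (u - xh) - (\<psi> u - \<psi> xh)"
  define N where "N = (norm (u - xh))\<^sup>2"
  have Dp: "D > 0" using neg unfolding D_def by simp
  have N0: "N \<ge> 0" unfolding N_def by simp
  define t where "t = min 1 (D / (2 * (M * N + 1)))"
  have MN: "M * N + 1 > 0" using M N0 by (simp add: add_nonneg_pos)
  have t0: "t > 0" unfolding t_def using Dp MN by simp
  have t1: "t \<le> 1" unfolding t_def by simp
  define ut where "ut = xh + t *\<^sub>R (u - xh)"
  have ut_eq: "ut = (1 - t) *\<^sub>R xh + t *\<^sub>R u" unfolding ut_def by (simp add: algebra_simps)
  have utC: "ut \<in> C" unfolding ut_eq using C xh u t0 t1 by (simp add: convex_alt)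
  have c1: "\<psi> ut \<le> (1 - t) * \<psi> xh + t * \<psi> u"
    unfolding ut_eq using convex_onD[OF cvx, of t xh u] t0 t1 by simp
  have c2: "\<psi> ut - \<psi> xh \<ge> inner w (ut - xh) - M * (norm (ut - xh))\<^sup>2" using H[OF utC] .
  have e1: "inner w (ut - xh) = t * inner w (u - xh)" unfolding ut_def by simp
  have e2: "(norm (ut - xh))\<^sup>2 = t\<^sup>2 * N" unfolding ut_def N_def using t0
    by (simp add: power_mult_distrib)
  have "t * (\<psi> u - \<psi> xh) \<ge> t * inner w (u - xh) - M * (t\<^sup>2 * N)"
    using c1 c2 e1 e2 by (simp add: algebra_simps)
  then have "t * D \<le> t * (t * (M * N))" unfolding D_def by (simp add: algebra_simps power2_eq_square)
  then have "D \<le> t * (M * N)" using t0 by simp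
  also have "\<dots> \<le> D / (2 * (M * N + 1)) * (M * N + 1)"
    using t_def MN Dp by (intro mult_mono) (auto simp: M N0 less_imp_le)
  also have "\<dots> = D / 2" using MN by (simp add: field_simps)
  finally show False using Dp by simp
qed

lemma subgrad_exists:
  fixes f :: "'a::euclidean_space \<Rightarrow> real"
  assumes "convex_on UNIV f"
  shows "\<exists>s. s \<in> cvx_subdiff f x"
  using sep_subgrad[OF assms, of "{x}" x] unfolding cvx_subdiff_def
  by (auto simp: inner_commute)

lemma decomp:
  fixes f :: "'a::euclidean_space \<Rightarrow> real"
  assumes cvx: "convex_on UNIV f" and C: "convex C" and xh: "xh \<in> C" and lam: "lam \<ge> 0" and M: "M \<ge> 0"
    and H: "\<And>u. u \<in> C \<Longrightarrow> lam * (f u - f xh) \<ge> inner w (u - xh) - M * (norm (u - xh))\<^sup>2"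
  shows "\<exists>s. s \<in> cvx_subdiff f xh \<and> (\<forall>u\<in>C. inner (w - lam *\<^sub>R s) (u - xh) \<le> 0)"
proof -
  have cl: "convex_on UNIV (\<lambda>u. lam * f u)" using cvx lam by auto
  have ex: "lam * f u - lam * f xh \<ge> inner w (u - xh)" if "u \<in> C" for u
    using ct_lemma[OF cl C xh M _ that, of w] H by (simp add: algebra_simps)
  show ?thesis
  proof (cases "lam = 0")
    case True
    obtain s where "s \<in> cvx_subdiff f xh" using subgrad_exists[OF cvx] by blast
    then show ?thesis using ex True by auto
  next
    case False
    then have lp: "lam > 0" using lam by simp
    define \<phi> where "\<phi> u = lam * f u - inner w u" for u
    have lin: "convex_on UNIV (\<lambda>u. - inner w u)"
      unfolding convex_on_def by (simp add: inner_add_right)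
    have cphi: "convex_on UNIV \<phi>" unfolding \<phi>_def using convex_on_add[OF cl lin] by simp
    have mn: "\<phi> xh \<le> \<phi> u" if "u \<in> C" for u
      using ex[OF that] unfolding \<phi>_def by (simp add: inner_diff_right)
    obtain a where a1: "\<forall>y. \<phi> y \<ge> \<phi> xh + inner a (y - xh)" and a2: "\<forall>u\<in>C. inner a (u - xh) \<ge> 0"
      using sep_subgrad[OF cphi C xh mn] by blast
    define s where "s = (1 / lam) *\<^sub>R (w + a)"
    have "f y \<ge> f xh + inner s (y - xh)" for y
    proof -
      have "lam * f y - inner w y \<ge> lam * f xh - inner w xh + inner a (y - xh)"
        using a1 unfolding \<phi>_def by auto
      then have "lam * (f y - f xh) \<ge> inner (w + a) (y - xh)"
        by (simp add: inner_diff_right inner_add_left algebra_simps)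
      then have "f y - f xh \<ge> inner (w + a) (y - xh) / lam" using lp by (simp add: divide_le_eq mult.commute)
      then show ?thesis unfolding s_def by simp
    qed
    then have "s \<in> cvx_subdiff f xh" unfolding cvx_subdiff_def by auto
    moreover have "w - lam *\<^sub>R s = - a" unfolding s_def using lp by simp
    ultimately show ?thesis using a2 by auto
  qed
qed

lemma sq_exp: "(norm (a + b))\<^sup>2 = (norm a)\<^sup>2 + 2 * inner a b + (norm (b::'a::real_inner))\<^sup>2"
  by (simp add: power2_norm_eq_inner inner_add_left inner_add_right inner_commute)

lemma prox_facts:
  fixes f :: "'a::euclidean_space \<Rightarrow> real"
  assumes xh: "xh \<in> trial_set f g C dg dh1 ck x z \<alpha>" and xC: "x \<in> C"
  defines "y \<equiv> x - \<alpha> *\<^sub>R (dh1 x - ck\<^sup>2 *\<^sub>R dg x - z)"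
  shows "xh \<in> C"
    and "\<And>u. u \<in> C \<Longrightarrow> 2*\<alpha>*ck*f xh + (norm (xh - y))\<^sup>2 / 2 \<le> 2*\<alpha>*ck*f u + (norm (u - y))\<^sup>2 / 2"
proof -
  have P: "ereal (2*\<alpha>*ck*f xh) + ind C xh + ereal ((norm (xh - y))\<^sup>2 / 2)
      \<le> ereal (2*\<alpha>*ck*f u) + ind C u + ereal ((norm (u - y))\<^sup>2 / 2)" for u
    using xh unfolding trial_set_def prox_def y_def by auto
  show xhC: "xh \<in> C"
  proof (rule ccontr)
    assume "xh \<notin> C"
    then show False using P[of x] xC by (simp add: ind_def)
  qed
  fix u assume "u \<in> C"
  then show "2*\<alpha>*ck*f xh + (norm (xh - y))\<^sup>2 / 2 \<le> 2*\<alpha>*ck*f u + (norm (u - y))\<^sup>2 / 2"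
    using P[of u] xhC by (simp add: ind_def)
qed

lemma H_conj:
  assumes "xx \<in> C" and "z \<in> cvx_subdiff h2 x"
  shows "Hfun f g h1 h2 C (xx, z, c) = ereal (2*c*f xx - c\<^sup>2 * g xx + h1 xx - inner xx z + (inner x z - h2 x))"
  unfolding H_in[OF assms(1)] conj_eq[OF assms(2)] by (simp only: plus_ereal.simps)
lemma H_lower:
  assumes "xx \<in> C"
  shows "Hfun f g h1 h2 C (xx, z, c) \<ge> ereal (2*c*f xx - c\<^sup>2 * g xx + h1 xx - inner xx z + (inner x z - h2 x))"
proof -
  have "ereal (2*c*f xx - c\<^sup>2 * g xx + h1 xx - inner xx z + (inner x z - h2 x))
      = ereal (2*c*f xx - c\<^sup>2 * g xx + h1 xx - inner xx z) + ereal (inner x z - h2 x)" by (simp only: plus_ereal.simps)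
  also have "\<dots> \<le> ereal (2*c*f xx - c\<^sup>2 * g xx + h1 xx - inner xx z) + conj_fun h2 z"
    by (rule add_left_mono) (rule conj_ge)
  also have "\<dots> = Hfun f g h1 h2 C (xx, z, c)" by (rule H_in[OF assms, symmetric])
  finally show ?thesis .
qed


lemma frechet_sub_limiting:
  assumes v: "v \<in> frechet_subdiff \<phi> x"
  shows "v \<in> limiting_subdiff \<phi> x"
proof -
  have fin: "\<not> \<bar>\<phi> x\<bar> = \<infinity>"
  proof
    assume "\<bar>\<phi> x\<bar> = \<infinity>"
    then have "frechet_subdiff \<phi> x = {}" unfolding frechet_subdiff_def by (rule if_P)
    then show False using v by (simp only: empty_iff)
  qed
  have "(\<lambda>_. x) \<longlonglongrightarrow> x \<and> (\<lambda>k. \<phi> ((\<lambda>_. x) k)) \<longlonglongrightarrow> \<phi> x \<and> (\<forall>k. (\<lambda>_. v) k \<in> frechet_subdiff \<phi> ((\<lambda>_. x) k)) \<and> (\<lambda>_. v) \<longlonglongrightarrow> v"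
    using v by (intro conjI allI tendsto_const) 
  then have "\<exists>xs vs. xs \<longlonglongrightarrow> x \<and> (\<lambda>k. \<phi> (xs k)) \<longlonglongrightarrow> \<phi> x \<and>
            (\<forall>k. vs k \<in> frechet_subdiff \<phi> (xs k)) \<and> vs \<longlonglongrightarrow> v"
    by - (rule exI[where x="\<lambda>_. x"], rule exI[where x="\<lambda>_. v"], assumption)
  then show ?thesis unfolding limiting_subdiff_def if_not_P[OF fin] by (simp only: mem_Collect_eq)
qed

lemma frechet_elem:
  fixes f g h1 h2 :: "'a::euclidean_space \<Rightarrow> real" and dg dh1 :: "'a \<Rightarrow> 'a"
  assumes fcont: "isCont f xh"
    and g_diff: "\<And>u. (g has_derivative (\<lambda>v. inner (dg u) v)) (at u)"
    and h1_diff: "\<And>u. (h1 has_derivative (\<lambda>v. inner (dh1 u) v)) (at u)"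
    and xhC: "xh \<in> C" and ch: "ch * g xh = f xh"
    and zs: "z \<in> cvx_subdiff h2 x"
    and w1: "\<And>u. u \<in> C \<Longrightarrow> 2 * ch * (f u - f xh) \<ge> inner w1 (u - xh)"
  shows "(w1 + dh1 xh - ch\<^sup>2 *\<^sub>R dg xh - z, x - xh, 0) \<in> frechet_subdiff (Hfun f g h1 h2 C) (xh, z, ch)"
proof -
  define p where "p = (xh, z, ch)"
  define Q3 where "Q3 q = 2 * snd (snd q) * f xh - (snd (snd q))\<^sup>2 * g (fst q) + h1 (fst q)
        - inner (fst q) (fst (snd q)) + inner x (fst (snd q))" for q :: "'a \<times> 'a \<times> real"
  define v' where "v' = (dh1 xh - ch\<^sup>2 *\<^sub>R dg xh - z, x - xh, 0::real)"
  define v where "v = (w1 + dh1 xh - ch\<^sup>2 *\<^sub>R dg xh - z, x - xh, 0::real)"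
  have gc: "((\<lambda>q. g (fst q)) has_derivative (\<lambda>h. inner (dg (fst q)) (fst h))) (at q)" for q :: "'a \<times> 'a \<times> real"
  proof -
    have "(fst has_derivative fst) (at q)" by (rule bounded_linear_imp_has_derivative[OF bounded_linear_fst])
    from has_derivative_compose[OF this g_diff] show ?thesis by simp
  qed
  have hc: "((\<lambda>q. h1 (fst q)) has_derivative (\<lambda>h. inner (dh1 (fst q)) (fst h))) (at q)" for q :: "'a \<times> 'a \<times> real"
  proof -
    have "(fst has_derivative fst) (at q)" by (rule bounded_linear_imp_has_derivative[OF bounded_linear_fst])
    from has_derivative_compose[OF this h1_diff] show ?thesis by simp
  qed
  have dQ: "(Q3 has_derivative (\<lambda>h. inner v' h)) (at p)"
    unfolding Q3_def p_def
    apply (rule has_derivative_eq_rhs)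
     apply (rule derivative_eq_intros gc hc refl)+
    apply (rule ext)
    subgoal for q
      unfolding v'_def
      by (cases q) (simp add: inner_diff_left inner_diff_right algebra_simps inner_commute ch[symmetric])
    done
  define Qp where "Qp = 2*ch*f xh - ch\<^sup>2 * g xh + h1 xh - inner xh z + (inner x z - h2 x)"
  have Hp: "Hfun f g h1 h2 C p = ereal Qp" unfolding p_def Qp_def by (rule H_conj[OF xhC zs])
  have Q3p: "Q3 p = Qp + h2 x" unfolding Q3_def p_def Qp_def by simp
  have dQ': "\<forall>e>0. \<exists>d>0. \<forall>y. norm (y - p) < d \<longrightarrow> norm (Q3 y - Q3 p - inner v' (y - p)) \<le> e * norm (y - p)"
    using dQ unfolding has_derivative_at_alt by blast
  have main: "\<exists>d>0. \<forall>y. norm (y - p) < d \<longrightarrow>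
      ereal (Qp + inner v (y - p) - e * norm (y - p)) \<le> Hfun f g h1 h2 C y" if e: "e > 0" for e
  proof -
    obtain d1 where d1: "d1 > 0" and d1': "\<And>y. norm (y - p) < d1 \<Longrightarrow> norm (Q3 y - Q3 p - inner v' (y - p)) \<le> (e/2) * norm (y - p)"
      using dQ' e by (meson half_gt_zero)
    obtain d2 where d2: "d2 > 0" and d2': "\<And>x'. dist x' xh < d2 \<Longrightarrow> dist (f x') (f xh) < e/4"
      using fcont e unfolding continuous_at_eps_delta by (meson divide_pos_pos zero_less_numeral)
    define d where "d = min d1 d2"
    have "ereal (Qp + inner v (y - p) - e * norm (y - p)) \<le> Hfun f g h1 h2 C y" if y: "norm (y - p) < d" for y
    proof -
      obtain x' z' c' where yy: "y = (x', z', c')" by (cases y) auto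
      show ?thesis
      proof (cases "x' \<in> C")
        case False
        then show ?thesis unfolding yy by (subst H_out[OF False]) simp
      next
        case True
        define N where "N = norm (y - p)"
        have Hy: "Hfun f g h1 h2 C y \<ge> ereal (2*c'*f x' - c'\<^sup>2 * g x' + h1 x' - inner x' z' + (inner x z' - h2 x))"
          unfolding yy by (rule H_lower[OF True])
        have nx: "norm (x' - xh) \<le> N" unfolding N_def yy p_def
          using norm_fst_le[of "x' - xh" "(z' - z, c' - ch)"] by simp
        have ypd: "y - p = (x' - xh, z' - z, c' - ch)" unfolding yy p_def by simp
        have nc: "\<bar>c' - ch\<bar> \<le> N"
        proof -
          have "\<bar>c' - ch\<bar> = norm (c' - ch)" by simp
          also have "\<dots> \<le> norm (z' - z, c' - ch)" by (rule norm_snd_le)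
          also have "\<dots> \<le> norm (x' - xh, z' - z, c' - ch)" by (rule norm_snd_le)
          finally show ?thesis unfolding N_def ypd .
        qed
        have e1: "\<bar>Q3 y - Q3 p - inner v' (y - p)\<bar> \<le> (e/2) * N"
          using d1'[of y] y unfolding d_def N_def by simp
        have fx: "\<bar>f x' - f xh\<bar> \<le> e/4"
          using d2'[of x'] nx y unfolding d_def N_def dist_norm by simp
        have e2: "\<bar>2 * (c' - ch) * (f x' - f xh)\<bar> \<le> (e/2) * N"
        proof -
          have "\<bar>2 * (c' - ch) * (f x' - f xh)\<bar> = 2 * \<bar>c' - ch\<bar> * \<bar>f x' - f xh\<bar>" by (simp only: abs_mult abs_numeral)
          also have "\<dots> \<le> 2 * N * (e/4)" using nc fx by (intro mult_mono) auto
          finally show ?thesis by (simp add: mult.commute)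
        qed
        have e3: "2 * ch * (f x' - f xh) \<ge> inner w1 (x' - xh)" using w1[OF True] .
        have Q3y: "Q3 y = 2*c'*f xh - c'\<^sup>2 * g x' + h1 x' - inner x' z' + inner x z'"
          unfolding Q3_def yy by simp
        have iv: "inner v (y - p) = inner v' (y - p) + inner w1 (x' - xh)"
          unfolding v_def v'_def yy p_def by (simp add: inner_add_left inner_diff_left)
        have "Qp + inner v (y - p) - e * N \<le> 2*c'*f x' - c'\<^sup>2 * g x' + h1 x' - inner x' z' + (inner x z' - h2 x)"
        proof -
          have "2*c'*f x' = 2*c'*f xh + 2 * ch * (f x' - f xh) + 2 * (c' - ch) * (f x' - f xh)"
            by (simp add: algebra_simps)
          then show ?thesis using abs_le_D2[OF e1] abs_le_D2[OF e2] e3 Q3y Q3p iv by linarith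
        qed
        then have "ereal (Qp + inner v (y - p) - e * N) \<le> ereal (2*c'*f x' - c'\<^sup>2 * g x' + h1 x' - inner x' z' + (inner x z' - h2 x))"
          by (simp only: ereal_less_eq(3))
        then show ?thesis using Hy unfolding N_def by (rule order_trans)
      qed
    qed
    then show ?thesis using d1 d2 unfolding d_def by (intro exI[of _ "min d1 d2"]) auto
  qed
  show ?thesis
    unfolding frechet_subdiff_def v_def[symmetric] p_def[symmetric] Hp
    using main by simp
qed

lemma compact_nbhd:
  fixes X :: "'a::euclidean_space set"
  assumes "compact X"
  shows "compact {u. \<exists>x\<in>X. norm (u - x) \<le> r}"
proof -
  have "{u. \<exists>x\<in>X. norm (u - x) \<le> r} = {x + y | x y. x \<in> X \<and> y \<in> cball 0 r}"
  proof (rule set_eqI, rule iffI)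
    fix u assume "u \<in> {u. \<exists>x\<in>X. norm (u - x) \<le> r}"
    then obtain x where "x \<in> X" "norm (u - x) \<le> r" by auto
    moreover have "u = x + (u - x)" by simp
    moreover have "u - x \<in> cball 0 r" using \<open>norm (u - x) \<le> r\<close> by (simp add: dist_norm norm_minus_commute)
    ultimately show "u \<in> {x + y | x y. x \<in> X \<and> y \<in> cball 0 r}" by blast
  next
    fix u assume "u \<in> {x + y | x y. x \<in> X \<and> y \<in> cball 0 r}"
    then obtain x y where "u = x + y" "x \<in> X" "y \<in> cball 0 r" by auto
    then have "norm (u - x) \<le> r" by (simp add: dist_norm)
    then show "u \<in> {u. \<exists>x\<in>X. norm (u - x) \<le> r}" using \<open>x \<in> X\<close> by blast
  qed
  then show ?thesis using compact_sums[OF assms compact_cball[of 0 r]] by (simp only:)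
qed

lemma bnd:
  fixes \<phi> :: "'a::metric_space \<Rightarrow> 'b::real_normed_vector"
  assumes "compact S" "continuous_on S \<phi>"
  shows "\<exists>M\<ge>0. \<forall>x\<in>S. norm (\<phi> x) \<le> M"
proof -
  have "bounded (\<phi> ` S)" using compact_imp_bounded[OF compact_continuous_image[OF assms(2,1)]] .
  then obtain M where "\<forall>y\<in>\<phi> ` S. norm y \<le> M" unfolding bounded_iff by blast
  then show ?thesis by (intro exI[of _ "max M 0"]) auto
qed

lemma subgrad_bound:
  fixes \<phi> :: "'a::real_inner \<Rightarrow> real"
  assumes B: "\<And>u. norm (u - x) \<le> 1 \<Longrightarrow> \<bar>\<phi> u\<bar> \<le> M" and s: "s \<in> cvx_subdiff \<phi> x"
  shows "norm s \<le> 2 * M"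
proof (cases "s = 0")
  case True
  have "\<bar>\<phi> x\<bar> \<le> M" using B[of x] by simp
  then show ?thesis using True by simp
next
  case False
  define u where "u = x + (1 / norm s) *\<^sub>R s"
  have nu: "norm (u - x) \<le> 1" unfolding u_def using False by simp
  have "\<phi> u \<ge> \<phi> x + inner s (u - x)" using s unfolding cvx_subdiff_def by auto
  moreover have "inner s (u - x) = norm s" unfolding u_def using False
    by (simp add: power2_norm_eq_inner[symmetric] power2_eq_square)
  moreover have "\<bar>\<phi> u\<bar> \<le> M" "\<bar>\<phi> x\<bar> \<le> M" using B nu B[of x] by auto
  ultimately show ?thesis by linarith
qed

lemma loc_lip_cont:
  fixes D :: "'a::metric_space \<Rightarrow> 'b::metric_space"
  assumes "\<And>u. \<exists>U L. open U \<and> u \<in> U \<and> L-lipschitz_on U D"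
  shows "continuous_on UNIV D"
proof -
  have "isCont D u" for u
  proof -
    obtain U L where "open U" "u \<in> U" "L-lipschitz_on U D" using assms by blast
    then have "continuous_on U D" using lipschitz_on_continuous_on by blast
    then show ?thesis using \<open>open U\<close> \<open>u \<in> U\<close> continuous_on_eq_continuous_at by blast
  qed
  then show ?thesis by (simp add: continuous_at_imp_continuous_on)
qed

lemma loc_lip_unif:
  fixes D :: "'a::metric_space \<Rightarrow> 'b::metric_space"
  assumes S: "compact S" and ll: "\<And>u. \<exists>U L. open U \<and> u \<in> U \<and> L-lipschitz_on U D"
  shows "\<exists>\<epsilon>>0. \<exists>L\<ge>0. \<forall>x\<in>S. \<forall>a\<in>ball x \<epsilon>. \<forall>b\<in>ball x \<epsilon>. dist (D a) (D b) \<le> L * dist a b"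
proof -
  obtain U LL where UL: "\<And>u. open (U u) \<and> u \<in> U u \<and> (LL u)-lipschitz_on (U u) D"
    using ll by metis
  have "S \<subseteq> (\<Union>c\<in>S. U c)" using UL by blast
  then obtain F where F: "F \<subseteq> S" "finite F" "S \<subseteq> (\<Union>c\<in>F. U c)"
    using compactE_image[OF S, of S U] UL by metis
  have opn: "\<And>G. G \<in> U ` F \<Longrightarrow> open G" using UL by auto
  obtain \<epsilon> where e: "\<epsilon> > 0" and eb: "\<And>x. x \<in> S \<Longrightarrow> \<exists>G \<in> U ` F. ball x \<epsilon> \<subseteq> G"
    using Heine_Borel_lemma[OF S F(3) opn] by blast
  define L where "L = (\<Sum>c\<in>F. \<bar>LL c\<bar>)"
  have L0: "L \<ge> 0" unfolding L_def by (simp add: sum_nonneg)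
  have "dist (D a) (D b) \<le> L * dist a b" if xS: "x \<in> S" and ab: "a \<in> ball x \<epsilon>" "b \<in> ball x \<epsilon>" for x a b
  proof -
    obtain c where c: "c \<in> F" "ball x \<epsilon> \<subseteq> U c" using eb[OF xS] by auto
    have abU: "a \<in> U c" "b \<in> U c" using c(2) ab by auto
    have "dist (D a) (D b) \<le> LL c * dist a b"
      using lipschitz_onD[of "LL c" "U c" D a b] UL abU by blast
    also have "\<dots> \<le> \<bar>LL c\<bar> * dist a b" by (intro mult_right_mono) auto
    also have "\<dots> \<le> L * dist a b" unfolding L_def
      by (intro mult_right_mono member_le_sum) (use c F in auto)
    finally show ?thesis .
  qed
  then show ?thesis using e L0 by blast
qed

lemma onorm_inner_le: "onorm (\<lambda>v. inner (a::'a::real_inner) v) \<le> norm a"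
  by (rule onorm_bound) (auto simp: Cauchy_Schwarz_ineq2)

lemma taylor_bound:
  fixes \<phi> :: "'a::euclidean_space \<Rightarrow> real"
  assumes der: "\<And>u. (\<phi> has_derivative (\<lambda>v. inner (D u) v)) (at u)"
    and L: "L \<ge> 0"
    and lip: "\<And>a. a \<in> cball x r \<Longrightarrow> norm (D a - D x) \<le> L * norm (a - x)"
    and y: "norm (y - x) \<le> r"
  shows "\<bar>\<phi> y - \<phi> x - inner (D x) (y - x)\<bar> \<le> L * (norm (y - x))\<^sup>2"
proof -
  define \<rho> where "\<rho> = norm (y - x)"
  define \<psi> where "\<psi> u = \<phi> u - inner (D x) u" for u
  have d\<psi>: "(\<psi> has_derivative (\<lambda>v. inner (D u - D x) v)) (at u within cball x \<rho>)" for u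
  proof -
    have l: "((\<lambda>u. inner (D x) u) has_derivative (\<lambda>v. inner (D x) v)) (at u within cball x \<rho>)"
      by (rule bounded_linear_imp_has_derivative[OF bounded_linear_inner_right])
    have "((\<lambda>u. \<phi> u - inner (D x) u) has_derivative (\<lambda>v. inner (D u) v - inner (D x) v)) (at u within cball x \<rho>)"
      by (rule has_derivative_diff[OF has_derivative_at_withinI[OF der] l])
    then show ?thesis unfolding \<psi>_def by (simp add: inner_diff_left)
  qed
  have B: "onorm (\<lambda>v. inner (D u - D x) v) \<le> L * \<rho>" if "u \<in> cball x \<rho>" for u
  proof -
    have "onorm (\<lambda>v. inner (D u - D x) v) \<le> norm (D u - D x)" by (rule onorm_inner_le)
    also have "\<dots> \<le> L * norm (u - x)" using lip[of u] that y unfolding \<rho>_def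
      by (simp add: dist_norm norm_minus_commute)
    also have "\<dots> \<le> L * \<rho>" using that L by (intro mult_left_mono) (auto simp: dist_norm norm_minus_commute)
    finally show ?thesis .
  qed
  have "norm (\<psi> y - \<psi> x) \<le> L * \<rho> * norm (y - x)"
    by (rule differentiable_bound[OF convex_cball d\<psi> B]) (auto simp: \<rho>_def dist_norm norm_minus_commute)
  then show ?thesis unfolding \<psi>_def \<rho>_def by (simp add: inner_diff_right power2_eq_square algebra_simps)
qed

lemma mvt_bound:
  fixes \<phi> :: "'a::euclidean_space \<Rightarrow> real"
  assumes der: "\<And>u. (\<phi> has_derivative (\<lambda>v. inner (D u) v)) (at u)"
    and B: "\<And>a. a \<in> cball x r \<Longrightarrow> norm (D a) \<le> M"
    and y: "norm (y - x) \<le> r"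
  shows "\<bar>\<phi> y - \<phi> x\<bar> \<le> M * norm (y - x)"
proof -
  have r0: "0 \<le> r" using y norm_ge_zero order_trans by blast
  have d: "(\<phi> has_derivative (\<lambda>v. inner (D u) v)) (at u within cball x r)" for u
    using der has_derivative_at_withinI by blast
  have "norm (\<phi> y - \<phi> x) \<le> M * norm (y - x)"
    by (rule differentiable_bound[OF convex_cball d order_trans[OF onorm_inner_le B]])
       (use y r0 in \<open>auto simp: dist_norm norm_minus_commute\<close>)
  then show ?thesis by simp
qed

lemma ls_accept:
  fixes f g h1 h2 :: "'a::euclidean_space \<Rightarrow> real" and dg dh1 :: "'a \<Rightarrow> 'a"
  assumes f_nonneg: "\<And>u. f u \<ge> 0"
    and xC: "x \<in> C" and gx: "g x > 0" and ck: "ck = f x / g x" and ck0: "0 \<le> ck" and ckM: "ck \<le> Mc"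
    and zs: "z \<in> cvx_subdiff h2 x" and nz: "norm z \<le> Mz"
    and fx: "f x \<le> Mf" and ndh: "norm (dh1 x) \<le> MH" and ndg: "norm (dg x) \<le> MG"
    and loc: "\<And>u. norm (u - x) \<le> \<delta> \<Longrightarrow> g u \<ge> m \<and> g u \<le> Mgg
        \<and> \<bar>g u - g x - inner (dg x) (u - x)\<bar> \<le> Lg * (norm (u - x))\<^sup>2
        \<and> \<bar>h1 u - h1 x - inner (dh1 x) (u - x)\<bar> \<le> Lh * (norm (u - x))\<^sup>2
        \<and> \<bar>f u / g u - ck\<bar> \<le> Lc * norm (u - x)"
    and m0: "m > 0" and \<delta>0: "0 < \<delta>" and Ls: "Lg \<ge> 0" "Lh \<ge> 0" "Lc \<ge> 0"
    and \<alpha>0: "0 < \<alpha>"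
    and \<alpha>1: "\<alpha> \<le> \<delta> / (2 * (2 * Mc * Mf / \<delta> + (MH + Mc\<^sup>2 * MG + Mz)) + 1)"
    and \<alpha>2: "\<alpha> \<le> 1 / (2 * (Mgg * Lc\<^sup>2 + Mc\<^sup>2 * Lg + Lh) + \<sigma> + 1)"
    and \<sigma>0: "\<sigma> > 0"
    and xh: "xh \<in> trial_set f g C dg dh1 ck x z \<alpha>"
  shows "accept f g h1 h2 C \<sigma> x z xh"
proof -
  define G where "G = dh1 x - ck\<^sup>2 *\<^sub>R dg x - z"
  define y where "y = x - \<alpha> *\<^sub>R G"
  define MGG where "MGG = MH + Mc\<^sup>2 * MG + Mz"
  define \<Delta> where "\<Delta> = xh - x"
  define d where "d = norm \<Delta>"
  have Mc0: "Mc \<ge> 0" using ck0 ckM by simp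
  have Mf0: "Mf \<ge> 0" using fx f_nonneg[of x] by simp
  have MG0: "MG \<ge> 0" using order_trans[OF norm_ge_zero ndg] .
  have ck2: "ck\<^sup>2 \<le> Mc\<^sup>2" using ck0 ckM by (simp add: power_mono)
  have nG: "norm G \<le> MGG"
  proof -
    have t1: "norm G \<le> norm (dh1 x - ck\<^sup>2 *\<^sub>R dg x) + norm z" unfolding G_def by (rule norm_triangle_ineq4)
    have t2: "norm (dh1 x - ck\<^sup>2 *\<^sub>R dg x) \<le> norm (dh1 x) + norm (ck\<^sup>2 *\<^sub>R dg x)" by (rule norm_triangle_ineq4)
    have "norm G \<le> norm (dh1 x) + norm (ck\<^sup>2 *\<^sub>R dg x) + norm z" using t1 t2 by linarith
    also have "norm (ck\<^sup>2 *\<^sub>R dg x) \<le> Mc\<^sup>2 * MG"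
      using ck2 ndg MG0 by (simp add: mult_mono)
    finally show ?thesis unfolding MGG_def using ndh nz by linarith
  qed
  have MGG0: "MGG \<ge> 0" using order_trans[OF norm_ge_zero nG] .
  have xhC: "xh \<in> C" using prox_facts(1)[OF xh xC] .
  have P: "2*\<alpha>*ck*f xh + (norm (xh - y))\<^sup>2 / 2 \<le> 2*\<alpha>*ck*f x + (norm (x - y))\<^sup>2 / 2"
    using prox_facts(2)[OF xh xC xC] unfolding y_def G_def .
  have e1: "(norm (xh - y))\<^sup>2 = d\<^sup>2 + 2 * (\<alpha> * inner \<Delta> G) + (norm (\<alpha> *\<^sub>R G))\<^sup>2"
  proof -
    have "xh - y = \<Delta> + \<alpha> *\<^sub>R G" unfolding y_def \<Delta>_def by simp
    then show ?thesis unfolding d_def using sq_exp[of \<Delta> "\<alpha> *\<^sub>R G"] by simp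
  qed
  have e2: "x - y = \<alpha> *\<^sub>R G" unfolding y_def by simp
  have E: "2*\<alpha>*ck*f xh + d\<^sup>2 / 2 + \<alpha> * inner \<Delta> G \<le> 2*\<alpha>*ck*f x"
    using P unfolding e1 e2 by (simp add: field_simps)
  have iG: "\<bar>inner \<Delta> G\<bar> \<le> d * MGG"
    unfolding d_def using order_trans[OF Cauchy_Schwarz_ineq2 mult_left_mono[OF nG norm_ge_zero]] .
  have dle: "d \<le> \<delta>"
  proof (rule ccontr)
    assume "\<not> d \<le> \<delta>"
    then have dg: "d > \<delta>" by simp
    define K where "K = 2 * Mc * Mf / \<delta> + MGG"
    have "ck * f xh \<ge> 0" using ck0 f_nonneg by simp
    then have t1: "2*\<alpha>*ck*f xh \<ge> 0" using \<alpha>0 by simp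
    have t2: "- (\<alpha> * inner \<Delta> G) \<le> \<alpha> * (d * MGG)"
      using mult_left_mono[OF abs_le_D2[OF iG], of \<alpha>] \<alpha>0 by simp
    have t3: "2*\<alpha>*ck*f x = 2*\<alpha>*(ck*f x)" by simp
    have a1: "d\<^sup>2 / 2 \<le> 2*\<alpha>*(ck*f x) + \<alpha> * (d * MGG)"
      using E t1 t2 t3 by linarith
    have "ck * f x \<le> Mc * Mf" using ck0 ckM fx f_nonneg[of x] by (simp add: mult_mono)
    also have "\<dots> \<le> Mc * Mf * (d / \<delta>)"
    proof -
      have "1 \<le> d / \<delta>" using dg \<delta>0 by simp
      then have "Mc * Mf * 1 \<le> Mc * Mf * (d / \<delta>)" by (intro mult_left_mono) (simp_all add: Mc0 Mf0)
      then show ?thesis by simp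
    qed
    finally have a2: "ck * f x \<le> d * (Mc * Mf / \<delta>)" by (simp add: mult.commute)
    have "d\<^sup>2 / 2 \<le> \<alpha> * d * K"
    proof -
      have "2*\<alpha>*(ck*f x) \<le> 2*\<alpha>*(d * (Mc * Mf / \<delta>))" by (rule mult_left_mono[OF a2]) (use \<alpha>0 in simp)
      moreover have "\<alpha> * d * K = 2*\<alpha>*(d * (Mc * Mf / \<delta>)) + \<alpha> * (d * MGG)"
        unfolding K_def by (simp add: algebra_simps)
      ultimately show ?thesis using a1 by linarith
    qed
    then have "d * d \<le> d * (2 * \<alpha> * K)" by (simp add: power2_eq_square algebra_simps)
    then have "d \<le> 2 * \<alpha> * K" using dg \<delta>0 by simp
    also have "\<dots> < \<alpha> * (2 * K + 1)" using \<alpha>0 by (simp add: algebra_simps)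
    also have "\<dots> \<le> \<delta>"
    proof -
      define q where "q = 2 * Mc * Mf / \<delta>"
      have "q \<ge> 0" unfolding q_def using Mc0 Mf0 \<delta>0 by simp
      then have K0: "2 * K + 1 > 0" unfolding K_def q_def[symmetric] using MGG0 by simp
      have "\<alpha> \<le> \<delta> / (2 * K + 1)" using \<alpha>1 unfolding K_def MGG_def by simp
      then show ?thesis using K0 by (simp add: le_divide_eq)
    qed
    finally show False using dg by simp
  qed
  have L: "g xh \<ge> m \<and> g xh \<le> Mgg
        \<and> \<bar>g xh - g x - inner (dg x) \<Delta>\<bar> \<le> Lg * d\<^sup>2
        \<and> \<bar>h1 xh - h1 x - inner (dh1 x) \<Delta>\<bar> \<le> Lh * d\<^sup>2
        \<and> \<bar>f xh / g xh - ck\<bar> \<le> Lc * d"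
    using loc[of xh] dle unfolding d_def \<Delta>_def by simp
  define ch where "ch = f xh / g xh"
  have ghp: "g xh > 0" using L m0 by linarith
  have fch: "f xh = ch * g xh" unfolding ch_def using ghp by simp
  have a: "2*ch*f xh - ch\<^sup>2 * g xh = 2*ck*f xh - ck\<^sup>2 * g xh + g xh * (ch - ck)\<^sup>2"
    unfolding fch by (simp add: power2_eq_square algebra_simps)
  have b: "g xh * (ch - ck)\<^sup>2 \<le> Mgg * Lc\<^sup>2 * d\<^sup>2"
  proof -
    have "\<bar>ch - ck\<bar> \<le> Lc * d" using L unfolding ch_def by simp
    then have "\<bar>ch - ck\<bar>\<^sup>2 \<le> (Lc * d)\<^sup>2" by (rule power_mono) simp
    then have "(ch - ck)\<^sup>2 \<le> (Lc * d)\<^sup>2" by simp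
    then have "g xh * (ch - ck)\<^sup>2 \<le> Mgg * (Lc * d)\<^sup>2"
      using L ghp by (intro mult_mono) auto
    then show ?thesis by (simp add: power_mult_distrib)
  qed
  have c: "ck\<^sup>2 * g xh \<ge> ck\<^sup>2 * g x + ck\<^sup>2 * inner (dg x) \<Delta> - Mc\<^sup>2 * Lg * d\<^sup>2"
  proof -
    have "g xh \<ge> g x + inner (dg x) \<Delta> - Lg * d\<^sup>2" using L by (simp add: abs_le_iff)
    then have "ck\<^sup>2 * g xh \<ge> ck\<^sup>2 * (g x + inner (dg x) \<Delta> - Lg * d\<^sup>2)" by (simp add: mult_left_mono)
    moreover have "ck\<^sup>2 * (Lg * d\<^sup>2) \<le> Mc\<^sup>2 * (Lg * d\<^sup>2)" using ck2 Ls by (simp add: mult_right_mono)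
    ultimately show ?thesis by (simp add: algebra_simps)
  qed
  have dd: "h1 xh \<le> h1 x + inner (dh1 x) \<Delta> + Lh * d\<^sup>2" using L by (simp add: abs_le_iff)
  have e: "(f x)\<^sup>2 / g x = 2*ck*f x - ck\<^sup>2 * g x" unfolding ck using gx by (simp add: power2_eq_square field_simps)
  have fE: "2*ck*f xh + inner \<Delta> G - 2*ck*f x \<le> - (d\<^sup>2 / (2*\<alpha>))"
  proof -
    have "\<alpha> * (2*ck*f xh + inner \<Delta> G - 2*ck*f x) \<le> - (d\<^sup>2 / 2)" using E by (simp add: algebra_simps)
    then show ?thesis using \<alpha>0 by (simp add: field_simps)
  qed
  have g: "inner \<Delta> G = inner (dh1 x) \<Delta> - ck\<^sup>2 * inner (dg x) \<Delta> - inner z \<Delta>"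
    unfolding G_def by (simp add: inner_diff_right inner_commute)
  have g2: "inner x z - inner xh z = - inner z \<Delta>" unfolding \<Delta>_def by (simp add: inner_diff_right inner_commute)
  define M0 where "M0 = Mgg * Lc\<^sup>2 + Mc\<^sup>2 * Lg + Lh"
  have h: "Mgg * Lc\<^sup>2 * d\<^sup>2 + Mc\<^sup>2 * Lg * d\<^sup>2 + Lh * d\<^sup>2 + \<sigma> / 2 * d\<^sup>2 \<le> d\<^sup>2 / (2*\<alpha>)"
  proof -
    have Mgg0: "Mgg \<ge> 0" using L m0 by linarith
    have "M0 \<ge> 0" unfolding M0_def using Mgg0 Ls by simp
    then have M0p: "2 * M0 + \<sigma> + 1 > 0" using \<sigma>0 by simp
    have "\<alpha> * (2 * M0 + \<sigma> + 1) \<le> 1" using \<alpha>2 M0p unfolding M0_def by (simp add: le_divide_eq)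
    then have "M0 + \<sigma>/2 \<le> 1 / (2*\<alpha>)" using \<alpha>0 by (simp add: field_simps)
    then have "(M0 + \<sigma>/2) * d\<^sup>2 \<le> 1 / (2*\<alpha>) * d\<^sup>2" by (rule mult_right_mono) simp
    then show ?thesis unfolding M0_def by (simp add: algebra_simps)
  qed
  have real_ineq: "2*ch*f xh - ch\<^sup>2 * g xh + h1 xh - inner xh z + (inner x z - h2 x) + \<sigma> / 2 * d\<^sup>2
      \<le> (f x)\<^sup>2 / g x + h1 x - h2 x"
    using a b c dd e fE g g2 h by linarith
  have Hv: "Hfun f g h1 h2 C (xh, z, f xh / g xh) = ereal (2*ch*f xh - ch\<^sup>2 * g xh + h1 xh - inner xh z + (inner x z - h2 x))"
    unfolding ch_def by (rule H_conj[OF xhC zs])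
  have Fv: "Fobj f g h1 h2 C x = ereal ((f x)\<^sup>2 / g x + h1 x - h2 x)"
    unfolding Fobj_def using xC gx by simp
  show ?thesis unfolding accept_def Hv Fv using ghp real_ineq
    by (simp only: plus_ereal.simps ereal_less_eq(3)) (simp add: d_def \<Delta>_def)
qed

lemma step_bound:
  fixes f g h1 h2 :: "'a::euclidean_space \<Rightarrow> real" and dg dh1 :: "'a \<Rightarrow> 'a"
  assumes fconv: "convex_on UNIV f" and fcont: "isCont f xh"
    and g_diff: "\<And>u. (g has_derivative (\<lambda>v. inner (dg u) v)) (at u)"
    and h1_diff: "\<And>u. (h1 has_derivative (\<lambda>v. inner (dh1 u) v)) (at u)"
    and Cc: "convex C" and xC: "x \<in> C"
    and xh: "xh \<in> trial_set f g C dg dh1 ck x z \<alpha>" and \<alpha>l: "\<alpha> \<ge> \<alpha>l" "\<alpha>l > 0"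
    and ck0: "ck \<ge> 0" and ckM: "ck \<le> Mc" and ch0: "ch \<ge> 0" and chM: "ch \<le> Mc"
    and ch: "ch * g xh = f xh"
    and zs: "z \<in> cvx_subdiff h2 x"
    and cL: "\<bar>ch - ck\<bar> \<le> Lc * norm (xh - x)"
    and dh1L: "norm (dh1 xh - dh1 x) \<le> LH * norm (xh - x)"
    and dgL: "norm (dg xh - dg x) \<le> LG * norm (xh - x)"
    and dgM: "norm (dg xh) \<le> MG"
    and sB: "\<And>s. s \<in> cvx_subdiff f xh \<Longrightarrow> norm s \<le> Bf"
    and nn: "Lc \<ge> 0" "LH \<ge> 0" "LG \<ge> 0" "MG \<ge> 0" "Bf \<ge> 0"
  shows "\<exists>v \<in> limiting_subdiff (Hfun f g h1 h2 C) (xh, z, ch).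
           norm v \<le> (1/\<alpha>l + LH + 2*Mc*Lc*MG + Mc\<^sup>2*LG + 2*Lc*Bf + 1) * norm (xh - x)"
proof -
  define d where "d = norm (xh - x)"
  define G where "G = dh1 x - ck\<^sup>2 *\<^sub>R dg x - z"
  define y where "y = x - \<alpha> *\<^sub>R G"
  define w where "w = y - xh"
  have \<alpha>0: "\<alpha> > 0" using \<alpha>l by simp
  have xhC: "xh \<in> C" using prox_facts(1)[OF xh xC] .
  have P3: "2*\<alpha>*ck * (f u - f xh) \<ge> inner w (u - xh) - (1/2) * (norm (u - xh))\<^sup>2" if uC: "u \<in> C" for u
  proof -
    have P: "2*\<alpha>*ck*f xh + (norm (xh - y))\<^sup>2 / 2 \<le> 2*\<alpha>*ck*f u + (norm (u - y))\<^sup>2 / 2"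
      using prox_facts(2)[OF xh xC uC] unfolding y_def G_def .
    have "u - y = (u - xh) + (xh - y)" by simp
    then have "(norm (u - y))\<^sup>2 = (norm (u - xh))\<^sup>2 + 2 * inner (u - xh) (xh - y) + (norm (xh - y))\<^sup>2"
      using sq_exp[of "u - xh" "xh - y"] by simp
    moreover have "inner (u - xh) (xh - y) = - inner w (u - xh)" unfolding w_def
      by (simp add: inner_commute inner_diff_left inner_diff_right)
    ultimately show ?thesis using P by (simp add: algebra_simps)
  qed
  have lam: "2*\<alpha>*ck \<ge> 0" using \<alpha>0 ck0 by simp
  obtain s where s: "s \<in> cvx_subdiff f xh" and sn: "\<forall>u\<in>C. inner (w - (2*\<alpha>*ck) *\<^sub>R s) (u - xh) \<le> 0"
    using decomp[OF fconv Cc xhC lam _ P3] by auto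
  define w1 where "w1 = (1/\<alpha>) *\<^sub>R w + (2 * (ch - ck)) *\<^sub>R s"
  have w1p: "2 * ch * (f u - f xh) \<ge> inner w1 (u - xh)" if uC: "u \<in> C" for u
  proof -
    have "f u \<ge> f xh + inner s (u - xh)" using s unfolding cvx_subdiff_def by blast
    then have sg: "f u - f xh \<ge> inner s (u - xh)" by linarith
    have "2 * ch * inner s (u - xh) \<le> 2 * ch * (f u - f xh)" using sg ch0 by (simp add: mult_left_mono)
    moreover have "inner (w - (2*\<alpha>*ck) *\<^sub>R s) (u - xh) \<le> 0" using sn uC by auto
    then have "(1/\<alpha>) * inner (w - (2*\<alpha>*ck) *\<^sub>R s) (u - xh) \<le> 0" using \<alpha>0
      by (simp add: mult_nonneg_nonpos divide_nonpos_pos)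
    moreover have "inner w1 (u - xh) = (1/\<alpha>) * inner (w - (2*\<alpha>*ck) *\<^sub>R s) (u - xh) + 2 * ch * inner s (u - xh)"
      unfolding w1_def using \<alpha>0 by (simp add: inner_add_left inner_diff_left algebra_simps)
    ultimately show ?thesis by linarith
  qed
  define v1 where "v1 = w1 + dh1 xh - ch\<^sup>2 *\<^sub>R dg xh - z"
  have vF: "(v1, x - xh, 0) \<in> frechet_subdiff (Hfun f g h1 h2 C) (xh, z, ch)"
    unfolding v1_def by (rule frechet_elem[OF fcont g_diff h1_diff xhC ch zs w1p])
  have vL: "(v1, x - xh, 0) \<in> limiting_subdiff (Hfun f g h1 h2 C) (xh, z, ch)"
    by (rule frechet_sub_limiting[OF vF])
  have v1eq: "v1 = (1/\<alpha>) *\<^sub>R (x - xh) + (dh1 xh - dh1 x) + ck\<^sup>2 *\<^sub>R (dg x - dg xh)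
                  + (ck\<^sup>2 - ch\<^sup>2) *\<^sub>R dg xh + (2 * (ch - ck)) *\<^sub>R s"
    unfolding v1_def w1_def w_def y_def G_def using \<alpha>0
    by (simp add: algebra_simps scaleR_diff_right)
  have n1: "norm ((1/\<alpha>) *\<^sub>R (x - xh)) \<le> (1/\<alpha>l) * d"
  proof -
    have "norm ((1/\<alpha>) *\<^sub>R (x - xh)) = (1/\<alpha>) * d" unfolding d_def using \<alpha>0 by (simp add: norm_minus_commute)
    also have "\<dots> \<le> (1/\<alpha>l) * d" unfolding d_def using \<alpha>l by (intro mult_right_mono) (auto simp: frac_le)
    finally show ?thesis .
  qed
  have n2: "norm (dh1 xh - dh1 x) \<le> LH * d" using dh1L unfolding d_def .
  have ck2: "ck\<^sup>2 \<le> Mc\<^sup>2" using ck0 ckM by (simp add: power_mono)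
  have n3: "norm (ck\<^sup>2 *\<^sub>R (dg x - dg xh)) \<le> Mc\<^sup>2 * LG * d"
  proof -
    have "norm (ck\<^sup>2 *\<^sub>R (dg x - dg xh)) = ck\<^sup>2 * norm (dg xh - dg x)" by (simp add: norm_minus_commute)
    also have "\<dots> \<le> Mc\<^sup>2 * (LG * d)" using ck2 dgL unfolding d_def by (intro mult_mono) auto
    finally show ?thesis by simp
  qed
  have n4: "norm ((ck\<^sup>2 - ch\<^sup>2) *\<^sub>R dg xh) \<le> 2*Mc*Lc*MG * d"
  proof -
    have "ck\<^sup>2 - ch\<^sup>2 = (ck - ch) * (ck + ch)" by (simp add: power2_eq_square algebra_simps)
    then have "\<bar>ck\<^sup>2 - ch\<^sup>2\<bar> = \<bar>ck - ch\<bar> * \<bar>ck + ch\<bar>" by (simp add: abs_mult)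
    also have "\<dots> = \<bar>ch - ck\<bar> * (ck + ch)" using ck0 ch0 by (simp add: abs_minus_commute)
    also have "\<dots> \<le> (Lc * d) * (2 * Mc)" using cL ckM chM ck0 ch0 unfolding d_def
      by (intro mult_mono) auto
    finally have "\<bar>ck\<^sup>2 - ch\<^sup>2\<bar> \<le> (Lc * d) * (2 * Mc)" .
    then have "\<bar>ck\<^sup>2 - ch\<^sup>2\<bar> * norm (dg xh) \<le> (Lc * d) * (2 * Mc) * MG"
      using dgM ck0 ckM by (intro mult_mono) (auto simp: d_def nn)
    moreover have "norm ((ck\<^sup>2 - ch\<^sup>2) *\<^sub>R dg xh) = \<bar>ck\<^sup>2 - ch\<^sup>2\<bar> * norm (dg xh)" by (rule norm_scaleR)
    ultimately show ?thesis by (simp add: algebra_simps)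
  qed
  have n5: "norm ((2 * (ch - ck)) *\<^sub>R s) \<le> 2*Lc*Bf * d"
  proof -
    have "norm ((2 * (ch - ck)) *\<^sub>R s) = 2 * \<bar>ch - ck\<bar> * norm s" by (simp only: norm_scaleR abs_mult abs_numeral)
    also have "\<dots> \<le> 2 * (Lc * d) * Bf" using cL sB[OF s] unfolding d_def by (intro mult_mono) auto
    finally show ?thesis by (simp add: algebra_simps)
  qed
  have nv1: "norm v1 \<le> (1/\<alpha>l + LH + 2*Mc*Lc*MG + Mc\<^sup>2*LG + 2*Lc*Bf) * d"
  proof -
    have "norm v1 \<le> norm ((1/\<alpha>) *\<^sub>R (x - xh)) + norm (dh1 xh - dh1 x) + norm (ck\<^sup>2 *\<^sub>R (dg x - dg xh))
                  + norm ((ck\<^sup>2 - ch\<^sup>2) *\<^sub>R dg xh) + norm ((2 * (ch - ck)) *\<^sub>R s)"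
      unfolding v1eq by (intro norm_triangle_le add_mono order_refl)
    then show ?thesis using n1 n2 n3 n4 n5 by (simp add: algebra_simps)
  qed
  have "norm (v1, x - xh, 0::real) \<le> norm v1 + norm (x - xh, 0::real)" by (rule norm_Pair_le)
  moreover have "norm (x - xh, 0::real) = d" unfolding d_def by (simp add: norm_Pair norm_minus_commute)
  ultimately have "norm (v1, x - xh, 0::real) \<le> (1/\<alpha>l + LH + 2*Mc*Lc*MG + Mc\<^sup>2*LG + 2*Lc*Bf + 1) * d"
    using nv1 by (simp add: algebra_simps)
  then show ?thesis using vL unfolding d_def by blast
qed

theorem proposition5p2:
  fixes f g h1 h2 :: "'a::euclidean_space \<Rightarrow> real"
    and dg dh1 :: "'a \<Rightarrow> 'a"
    and C :: "'a set"
    and x z :: "nat \<Rightarrow> 'a" and c atil :: "nat \<Rightarrow> real"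
    and alo ahi \<sigma> r :: real
  assumes f_nonneg: "\<And>u. f u \<ge> 0"
    and g_nonneg: "\<And>u. g u \<ge> 0"
    and C_closed: "closed C" and C_convex: "convex C"
    and C_Omega: "C \<inter> {u. g u \<noteq> 0} \<noteq> {}"
    and f_convex: "convex_on UNIV f"
    and g_diff: "\<And>u. (g has_derivative (\<lambda>v. inner (dg u) v)) (at u)"
    and dg_loclip: "\<And>u. \<exists>U L. open U \<and> u \<in> U \<and> L-lipschitz_on U dg"
    and h1_diff: "\<And>u. (h1 has_derivative (\<lambda>v. inner (dh1 u) v)) (at u)"
    and dh1_loclip: "\<And>u. \<exists>U L. open U \<and> u \<in> U \<and> L-lipschitz_on U dh1"
    and h2_convex: "convex_on UNIV h2"
    and params: "0 < alo" "alo < ahi" "0 < \<sigma>" "0 < r" "r < 1"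
    and x0_dom: "Fobj f g h1 h2 C (x 0) < \<infinity>"
    and X0_compact: "compact {u. Fobj f g h1 h2 C u < \<infinity> \<and> Fobj f g h1 h2 C u \<le> Fobj f g h1 h2 C (x 0)}"
    and c_def: "\<And>k. c k = f (x k) / g (x k)"
    and z_sub: "\<And>k. z k \<in> cvx_subdiff h2 (x k)"
    and atil_range: "\<And>k. alo \<le> atil k \<and> atil k \<le> ahi"
    and iter: "\<And>k. alg_step f g h1 h2 C dg dh1 \<sigma> r (x k) (c k) (z k) (atil k) (x (Suc k))"
  shows "(\<exists>a>0. \<forall>k\<ge>1.
            Hfun f g h1 h2 C (x (k + 1), z k, c (k + 1)) + ereal (a * (norm (x (k + 1) - x k))\<^sup>2)
              \<le> Hfun f g h1 h2 C (x k, z (k - 1), c k))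
       \<and> (\<exists>b>0. \<forall>k.
            limiting_subdiff (Hfun f g h1 h2 C) (x (k + 1), z k, c (k + 1)) \<noteq> {} \<and>
            infdist 0 (limiting_subdiff (Hfun f g h1 h2 C) (x (k + 1), z k, c (k + 1)))
              \<le> b * norm (x (k + 1) - x k))"
proof -
  have fcont: "continuous_on UNIV f" by (rule convex_on_continuous[OF open_UNIV f_convex])
  have h2cont: "continuous_on UNIV h2" by (rule convex_on_continuous[OF open_UNIV h2_convex])
  have gcont: "continuous_on UNIV g" by (rule has_derivative_continuous_on) (use g_diff in auto)
  have h1cont: "continuous_on UNIV h1" by (rule has_derivative_continuous_on) (use h1_diff in auto)
  have dgcont: "continuous_on UNIV dg" by (rule loc_lip_cont[OF dg_loclip])
  have dh1cont: "continuous_on UNIV dh1" by (rule loc_lip_cont[OF dh1_loclip])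
  have Fdom: "Fobj f g h1 h2 C u < \<infinity> \<longleftrightarrow> u \<in> C \<and> g u \<noteq> 0" for u
    unfolding Fobj_def by auto
  have Fval: "Fobj f g h1 h2 C u = ereal ((f u)\<^sup>2 / g u + h1 u - h2 u)" if "u \<in> C" "g u \<noteq> 0" for u
    unfolding Fobj_def using that by simp
  have acc: "accept f g h1 h2 C \<sigma> (x k) (z k) (x (Suc k))" for k
  proof -
    from iter[of k] obtain j xh where "accept f g h1 h2 C \<sigma> (x k) (z k) (xh j)" "x (Suc k) = xh j"
      unfolding alg_step_def by blast
    then show ?thesis by simp
  qed
  have inv: "x k \<in> C \<and> g (x k) \<noteq> 0" for k
  proof (induction k)
    case 0
    then show ?case using x0_dom Fdom by blast
  next
    case (Suc k)
    have a: "g (x (Suc k)) \<noteq> 0"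
      and b: "Hfun f g h1 h2 C (x (Suc k), z k, f (x (Suc k)) / g (x (Suc k))) + ereal (\<sigma> / 2 * (norm (x (Suc k) - x k))\<^sup>2) \<le> Fobj f g h1 h2 C (x k)"
      using acc[of k] unfolding accept_def by auto
    have "x (Suc k) \<in> C"
    proof (rule ccontr)
      assume "x (Suc k) \<notin> C"
      then have "Hfun f g h1 h2 C (x (Suc k), z k, f (x (Suc k)) / g (x (Suc k))) = \<infinity>" by (rule H_out)
      then have "Fobj f g h1 h2 C (x k) = \<infinity>" using b by simp
      then show False using Suc.IH Fdom[of "x k"] by simp
    qed
    then show ?case using a by simp
  qed
  have ck: "c k = f (x k) / g (x k)" for k by (rule c_def)
  define Fr where "Fr k = (f (x k))\<^sup>2 / g (x k) + h1 (x k) - h2 (x k)" for k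
  define Hr where "Hr k = 2 * c (Suc k) * f (x (Suc k)) - (c (Suc k))\<^sup>2 * g (x (Suc k)) + h1 (x (Suc k))
      - inner (x (Suc k)) (z k) + (inner (x k) (z k) - h2 (x k))" for k
  have Fk: "Fobj f g h1 h2 C (x k) = ereal (Fr k)" for k unfolding Fr_def using inv[of k] Fval by simp
  have Hk: "Hfun f g h1 h2 C (x (Suc k), z k, c (Suc k)) = ereal (Hr k)" for k
    unfolding Hr_def using H_conj[OF conjunct1[OF inv[of "Suc k"]] z_sub[of k]] by simp
  have dec: "Hr k + \<sigma> / 2 * (norm (x (Suc k) - x k))\<^sup>2 \<le> Fr k" for k
  proof -
    have "Hfun f g h1 h2 C (x (Suc k), z k, c (Suc k)) + ereal (\<sigma> / 2 * (norm (x (Suc k) - x k))\<^sup>2) \<le> Fobj f g h1 h2 C (x k)"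
      using acc[of k] unfolding accept_def ck by auto
    then show ?thesis unfolding Hk Fk by (simp only: plus_ereal.simps ereal_less_eq(3))
  qed
  have FleH: "Fr (Suc k) \<le> Hr k" for k
  proof -
    have sg: "h2 (x (Suc k)) \<ge> h2 (x k) + inner (z k) (x (Suc k) - x k)"
      using z_sub[of k] unfolding cvx_subdiff_def by blast
    have gp: "g (x (Suc k)) \<noteq> 0" using inv by blast
    have "2 * c (Suc k) * f (x (Suc k)) - (c (Suc k))\<^sup>2 * g (x (Suc k)) = (f (x (Suc k)))\<^sup>2 / g (x (Suc k))"
      unfolding ck using gp by (simp add: power2_eq_square field_simps)
    moreover have "inner (x (Suc k)) (z k) - inner (x k) (z k) = inner (z k) (x (Suc k) - x k)"
      by (simp add: inner_diff_right inner_commute)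
    ultimately show ?thesis unfolding Fr_def Hr_def using sg by linarith
  qed
  have FleH': "Fobj f g h1 h2 C (x (Suc k)) \<le> Hfun f g h1 h2 C (x (Suc k), z k, c (Suc k))" for k
    unfolding Fk Hk using FleH by simp
  have partI: "\<exists>a>0. \<forall>k\<ge>1.
            Hfun f g h1 h2 C (x (k + 1), z k, c (k + 1)) + ereal (a * (norm (x (k + 1) - x k))\<^sup>2)
              \<le> Hfun f g h1 h2 C (x k, z (k - 1), c k)"
  proof (intro exI[of _ "\<sigma>/2"] conjI allI impI)
    show "\<sigma>/2 > 0" using params by simp
    fix k :: nat assume "k \<ge> 1"
    then obtain j where kj: "k = Suc j" by (cases k) auto
    have "Hr k + \<sigma> / 2 * (norm (x (Suc k) - x k))\<^sup>2 \<le> Hr j" using dec[of k] FleH[of j] kj by simp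
    then show "Hfun f g h1 h2 C (x (k + 1), z k, c (k + 1)) + ereal (\<sigma> / 2 * (norm (x (k + 1) - x k))\<^sup>2)
              \<le> Hfun f g h1 h2 C (x k, z (k - 1), c k)"
      using Hk[of k] Hk[of j] kj by (simp only: Suc_eq_plus1[symmetric] diff_Suc_1 plus_ereal.simps ereal_less_eq(3))
  qed
  have Fmono: "Fr (Suc k) \<le> Fr k" for k
  proof -
    have "\<sigma> / 2 * (norm (x (Suc k) - x k))\<^sup>2 \<ge> 0" using params(3) by simp
    then show ?thesis using FleH[of k] dec[of k] by linarith
  qed
  have Fle0: "Fr k \<le> Fr 0" for k
  proof (induction k)
    case (Suc k)
    then show ?case using Fmono[of k] by linarith
  qed simp
  define X0 where "X0 = {u. Fobj f g h1 h2 C u < \<infinity> \<and> Fobj f g h1 h2 C u \<le> Fobj f g h1 h2 C (x 0)}"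
  have X0c: "compact X0" unfolding X0_def by (rule X0_compact)
  have xX0: "x k \<in> X0" for k
    unfolding X0_def using Fk[of k] Fk[of 0] Fle0[of k] by simp
  have X0sub: "u \<in> C \<and> g u > 0" if "u \<in> X0" for u
    using that g_nonneg[of u] Fdom[of u] unfolding X0_def by (auto simp: order_less_le)
  have X0ne: "X0 \<noteq> {}" using xX0 by blast
  obtain xm where xm: "xm \<in> X0" "\<And>u. u \<in> X0 \<Longrightarrow> g xm \<le> g u"
    using continuous_attains_inf[OF X0c X0ne continuous_on_subset[OF gcont]] by auto
  define m where "m = g xm / 2"
  have m0: "m > 0" unfolding m_def using X0sub[OF xm(1)] by simp
  have gX0: "g u \<ge> 2 * m" if "u \<in> X0" for u unfolding m_def using xm(2)[OF that] by simp
  have Tcl: "closed {u. g u \<le> m}" using gcont by (intro closed_Collect_le) (auto intro: continuous_on_const)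
  have Tdj: "X0 \<inter> {u. g u \<le> m} = {}" using gX0 m0 by fastforce
  obtain d0 where d0: "d0 > 0" and d0': "\<And>u v. u \<in> X0 \<Longrightarrow> v \<in> {u. g u \<le> m} \<Longrightarrow> d0 \<le> dist u v"
    using separate_compact_closed[OF X0c Tcl Tdj] by blast
  have gnear: "g v > m" if "u \<in> X0" "norm (v - u) < d0" for u v
  proof (rule ccontr)
    assume "\<not> g v > m"
    then have "d0 \<le> dist u v" using d0'[OF that(1)] by simp
    then show False using that(2) by (simp add: dist_norm norm_minus_commute)
  qed
  obtain \<epsilon>g Lg where eg: "\<epsilon>g > 0" "Lg \<ge> 0"
    and Lgd: "\<And>u a b. u \<in> X0 \<Longrightarrow> a \<in> ball u \<epsilon>g \<Longrightarrow> b \<in> ball u \<epsilon>g \<Longrightarrow> dist (dg a) (dg b) \<le> Lg * dist a b"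
    using loc_lip_unif[OF X0c dg_loclip] by blast
  obtain \<epsilon>h Lh where eh: "\<epsilon>h > 0" "Lh \<ge> 0"
    and Lhd: "\<And>u a b. u \<in> X0 \<Longrightarrow> a \<in> ball u \<epsilon>h \<Longrightarrow> b \<in> ball u \<epsilon>h \<Longrightarrow> dist (dh1 a) (dh1 b) \<le> Lh * dist a b"
    using loc_lip_unif[OF X0c dh1_loclip] by blast
  define \<delta> where "\<delta> = min (d0/2) (min 1 (min (\<epsilon>g/2) (\<epsilon>h/2)))"
  have \<delta>0: "\<delta> > 0" and \<delta>1: "\<delta> \<le> 1" and \<delta>d0: "\<delta> < d0" and \<delta>g: "\<delta> < \<epsilon>g" and \<delta>h: "\<delta> < \<epsilon>h"
    unfolding \<delta>_def using d0 eg eh by auto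
  define S where "S r = {u. \<exists>y\<in>X0. norm (u - y) \<le> r}" for r :: real
  have Sc: "compact (S r)" for r unfolding S_def by (rule compact_nbhd[OF X0c])
  have X0S: "u \<in> S r" if "u \<in> X0" "r \<ge> 0" for u r unfolding S_def using that by force
  have SS: "v \<in> S (r + t)" if uS: "u \<in> S r" and nv: "norm (v - u) \<le> t" for u v r t
  proof -
    obtain y where y: "y \<in> X0" "norm (u - y) \<le> r" using uS unfolding S_def by blast
    have "norm (v - y) \<le> norm (v - u) + norm (u - y)" by (rule norm_diff_triangle_le[OF order_refl order_refl])
    then have "norm (v - y) \<le> r + t" using y nv by linarith
    then show ?thesis unfolding S_def using y by blast
  qed
  obtain Mf where Mf: "\<And>u. u \<in> S 2 \<Longrightarrow> norm (f u) \<le> Mf" "Mf \<ge> 0"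
    using bnd[OF Sc continuous_on_subset[OF fcont]] by blast
  obtain Mh where Mh: "\<And>u. u \<in> S 2 \<Longrightarrow> norm (h2 u) \<le> Mh" "Mh \<ge> 0"
    using bnd[OF Sc continuous_on_subset[OF h2cont]] by blast
  obtain Mgg where Mgg: "\<And>u. u \<in> S 1 \<Longrightarrow> norm (g u) \<le> Mgg" "Mgg \<ge> 0"
    using bnd[OF Sc continuous_on_subset[OF gcont]] by blast
  obtain MG where MG: "\<And>u. u \<in> S 1 \<Longrightarrow> norm (dg u) \<le> MG" "MG \<ge> 0"
    using bnd[OF Sc continuous_on_subset[OF dgcont]] by blast
  obtain MH where MH: "\<And>u. u \<in> S 1 \<Longrightarrow> norm (dh1 u) \<le> MH" "MH \<ge> 0"
    using bnd[OF Sc continuous_on_subset[OF dh1cont]] by blast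
  have sgf: "norm s \<le> 2 * Mf" if uS: "u \<in> S 1" and sS: "s \<in> cvx_subdiff f u" for u s
  proof (rule subgrad_bound[OF _ sS])
    fix v assume "norm (v - u) \<le> 1"
    then have "v \<in> S (1 + 1)" by (rule SS[OF uS])
    then have "v \<in> S 2" by simp
    then show "\<bar>f v\<bar> \<le> Mf" using Mf(1) by simp
  qed
  have sgh: "norm s \<le> 2 * Mh" if uS: "u \<in> S 1" and sS: "s \<in> cvx_subdiff h2 u" for u s
  proof (rule subgrad_bound[OF _ sS])
    fix v assume "norm (v - u) \<le> 1"
    then have "v \<in> S (1 + 1)" by (rule SS[OF uS])
    then have "v \<in> S 2" by simp
    then show "\<bar>h2 v\<bar> \<le> Mh" using Mh(1) by simp
  qed
  have Smono: "u \<in> S t" if "u \<in> S r" "r \<le> t" for u r t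
    using that unfolding S_def by force
  have nearS: "a \<in> S 1" if "u \<in> X0" "norm (a - u) \<le> \<delta>" for u a
  proof -
    have "a \<in> S (0 + \<delta>)" by (rule SS[OF X0S[OF that(1)] that(2)]) simp
    then show ?thesis using Smono \<delta>1 by simp
  qed
  have X0S1: "u \<in> S 1" if "u \<in> X0" for u using X0S[OF that] by simp
  have S12: "u \<in> S 2" if "u \<in> S 1" for u using Smono[OF that] by simp
  have fLip: "\<bar>f a - f b\<bar> \<le> 2 * Mf * norm (a - b)" if ab: "a \<in> S 1" "b \<in> S 1" for a b
  proof -
    obtain sa where sa: "sa \<in> cvx_subdiff f a" using subgrad_exists[OF f_convex] by blast
    obtain sb where sb: "sb \<in> cvx_subdiff f b" using subgrad_exists[OF f_convex] by blast
    have "f a \<ge> f b + inner sb (a - b)" using sb unfolding cvx_subdiff_def by blast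
    moreover have "f b \<ge> f a + inner sa (b - a)" using sa unfolding cvx_subdiff_def by blast
    moreover have "\<bar>inner sb (a - b)\<bar> \<le> 2 * Mf * norm (a - b)"
      using order_trans[OF Cauchy_Schwarz_ineq2 mult_right_mono[OF sgf[OF ab(2) sb] norm_ge_zero]] .
    moreover have "\<bar>inner sa (b - a)\<bar> \<le> 2 * Mf * norm (b - a)"
      using order_trans[OF Cauchy_Schwarz_ineq2 mult_right_mono[OF sgf[OF ab(1) sa] norm_ge_zero]] .
    moreover have "norm (b - a) = norm (a - b)" by (rule norm_minus_commute)
    ultimately show ?thesis by (simp add: abs_le_iff)
  qed
  define Pr where "Pr u v \<longleftrightarrow> u \<in> X0 \<and> (v \<in> X0 \<or> norm (v - u) \<le> \<delta>)" for u v
  have Prf: "u \<in> S 1 \<and> v \<in> S 1 \<and> g v \<ge> m \<and> g u \<ge> m" if "Pr u v" for u v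
  proof -
    have u: "u \<in> X0" using that unfolding Pr_def by blast
    have gu: "g u \<ge> m" using gX0[OF u] m0 by simp
    show ?thesis
    proof (cases "v \<in> X0")
      case True
      then show ?thesis using X0S1 u gu gX0[OF True] m0 by auto
    next
      case False
      then have nv: "norm (v - u) \<le> \<delta>" using that unfolding Pr_def by blast
      have "g v > m" using gnear[OF u] nv \<delta>d0 by simp
      then show ?thesis using nearS[OF u nv] X0S1[OF u] gu by simp
    qed
  qed
  define Lgv where "Lgv = MG + 2 * Mgg / \<delta>"
  have Lgv0: "Lgv \<ge> 0" unfolding Lgv_def using MG(2) Mgg(2) \<delta>0 by simp
  have gLip: "\<bar>g v - g u\<bar> \<le> Lgv * norm (v - u)" if P: "Pr u v" for u v
  proof -
    have u: "u \<in> X0" using P unfolding Pr_def by blast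
    show ?thesis
    proof (cases "norm (v - u) \<le> \<delta>")
      case True
      have "\<bar>g v - g u\<bar> \<le> MG * norm (v - u)"
      proof (rule mvt_bound[OF g_diff _ True])
        fix a assume "a \<in> cball u \<delta>"
        then have "norm (a - u) \<le> \<delta>" by (simp add: dist_norm norm_minus_commute)
        then show "norm (dg a) \<le> MG" using MG(1) nearS[OF u] by blast
      qed
      also have "\<dots> \<le> Lgv * norm (v - u)" unfolding Lgv_def using Mgg(2) \<delta>0
        by (intro mult_right_mono) auto
      finally show ?thesis .
    next
      case False
      have "\<bar>g v - g u\<bar> \<le> \<bar>g v\<bar> + \<bar>g u\<bar>" by simp
      also have "\<dots> \<le> 2 * Mgg" using Mgg(1) Prf[OF P] by (smt (verit) real_norm_def)
      also have "\<dots> \<le> 2 * Mgg / \<delta> * norm (v - u)"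
      proof -
        have "1 \<le> norm (v - u) / \<delta>" using False \<delta>0 by simp
        then have "2 * Mgg * 1 \<le> 2 * Mgg * (norm (v - u) / \<delta>)" using Mgg(2) by (intro mult_left_mono) auto
        then show ?thesis by simp
      qed
      also have "\<dots> \<le> Lgv * norm (v - u)" unfolding Lgv_def using MG(2)
        by (intro mult_right_mono) auto
      finally show ?thesis .
    qed
  qed
  define Mc where "Mc = Mf / m"
  have cB: "0 \<le> f v / g v \<and> f v / g v \<le> Mc" if P: "Pr u v" for u v
  proof -
    have gv: "g v \<ge> m" "v \<in> S 1" using Prf[OF P] by auto
    have fv: "f v \<le> Mf" using Mf(1)[OF S12[OF gv(2)]] by simp
    have "f v / g v \<le> Mf / g v" using fv gv m0 by (simp add: divide_right_mono)
    also have "\<dots> \<le> Mf / m" using gv m0 Mf(2) by (simp add: frac_le)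
    finally show ?thesis unfolding Mc_def using f_nonneg[of v] gv m0 by simp
  qed
  have Mc0: "Mc \<ge> 0" unfolding Mc_def using Mf(2) m0 by simp
  define Lc where "Lc = (2 * Mf * Mgg + Mf * Lgv) / m\<^sup>2"
  have Lc0: "Lc \<ge> 0" unfolding Lc_def using Mf(2) Mgg(2) Lgv0 by simp
  have cLip: "\<bar>f v / g v - f u / g u\<bar> \<le> Lc * norm (v - u)" if P: "Pr u v" for u v
  proof -
    define n where "n = norm (v - u)"
    have pf: "u \<in> S 1" "v \<in> S 1" "g v \<ge> m" "g u \<ge> m" using Prf[OF P] by auto
    have gu: "g u > 0" "g v > 0" using pf m0 by auto
    have eq: "f v / g v - f u / g u = ((f v - f u) * g u + f u * (g u - g v)) / (g u * g v)"
      using gu by (simp add: field_simps)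
    have n1: "\<bar>(f v - f u) * g u\<bar> \<le> (2 * Mf * n) * Mgg"
    proof -
      have "\<bar>(f v - f u) * g u\<bar> = \<bar>f v - f u\<bar> * \<bar>g u\<bar>" by (simp add: abs_mult)
      also have "\<dots> \<le> (2 * Mf * n) * Mgg" using fLip[OF pf(2,1)] Mgg(1)[OF pf(1)] unfolding n_def
        by (intro mult_mono) auto
      finally show ?thesis .
    qed
    have n2: "\<bar>f u * (g u - g v)\<bar> \<le> Mf * (Lgv * n)"
    proof -
      have "\<bar>f u * (g u - g v)\<bar> = \<bar>f u\<bar> * \<bar>g v - g u\<bar>" by (simp add: abs_mult abs_minus_commute)
      also have "\<dots> \<le> Mf * (Lgv * n)" using Mf(1)[OF S12[OF pf(1)]] gLip[OF P] Mf(2) unfolding n_def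
        by (intro mult_mono) auto
      finally show ?thesis .
    qed
    have num: "\<bar>(f v - f u) * g u + f u * (g u - g v)\<bar> \<le> (2 * Mf * Mgg + Mf * Lgv) * n"
      using abs_triangle_ineq[of "(f v - f u) * g u" "f u * (g u - g v)"] n1 n2 by (simp add: algebra_simps)
    have den: "g u * g v \<ge> m\<^sup>2" using pf m0 by (simp add: power2_eq_square mult_mono)
    have "\<bar>f v / g v - f u / g u\<bar> = \<bar>(f v - f u) * g u + f u * (g u - g v)\<bar> / (g u * g v)"
      unfolding eq using gu by (simp add: abs_divide abs_mult)
    also have "\<dots> \<le> ((2 * Mf * Mgg + Mf * Lgv) * n) / m\<^sup>2"
      using num den m0 by (intro frac_le) auto
    finally show ?thesis unfolding Lc_def n_def by simp
  qed
  have tayg: "\<bar>g v - g u - inner (dg u) (v - u)\<bar> \<le> Lg * (norm (v - u))\<^sup>2" if u: "u \<in> X0" and nv: "norm (v - u) \<le> \<delta>" for u v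
  proof (rule taylor_bound[OF g_diff eg(2) _ nv])
    fix a assume "a \<in> cball u \<delta>"
    then have "a \<in> ball u \<epsilon>g" using \<delta>g by (simp add: dist_norm)
    then have "dist (dg a) (dg u) \<le> Lg * dist a u" using Lgd[OF u] eg(1) by simp
    then show "norm (dg a - dg u) \<le> Lg * norm (a - u)" by (simp add: dist_norm)
  qed
  have tayh: "\<bar>h1 v - h1 u - inner (dh1 u) (v - u)\<bar> \<le> Lh * (norm (v - u))\<^sup>2" if u: "u \<in> X0" and nv: "norm (v - u) \<le> \<delta>" for u v
  proof (rule taylor_bound[OF h1_diff eh(2) _ nv])
    fix a assume "a \<in> cball u \<delta>"
    then have "a \<in> ball u \<epsilon>h" using \<delta>h by (simp add: dist_norm)
    then have "dist (dh1 a) (dh1 u) \<le> Lh * dist a u" using Lhd[OF u] eh(1) by simp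
    then show "norm (dh1 a - dh1 u) \<le> Lh * norm (a - u)" by (simp add: dist_norm)
  qed
  define LG where "LG = Lg + 2 * MG / \<epsilon>g"
  define LH where "LH = Lh + 2 * MH / \<epsilon>h"
  have LG0: "LG \<ge> 0" unfolding LG_def using eg MG(2) by simp
  have LH0: "LH \<ge> 0" unfolding LH_def using eh MH(2) by simp
  have dgLip: "norm (dg v - dg u) \<le> LG * norm (v - u)" if u: "u \<in> X0" and v: "v \<in> X0" for u v
  proof (cases "norm (v - u) < \<epsilon>g")
    case True
    then have "v \<in> ball u \<epsilon>g" by (simp add: dist_norm norm_minus_commute)
    then have "dist (dg v) (dg u) \<le> Lg * dist v u" using Lgd[OF u] eg(1) by simp
    then have "norm (dg v - dg u) \<le> Lg * norm (v - u)" by (simp add: dist_norm)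
    also have "\<dots> \<le> LG * norm (v - u)" unfolding LG_def using MG(2) eg(1) by (intro mult_right_mono) auto
    finally show ?thesis .
  next
    case False
    have "norm (dg v - dg u) \<le> norm (dg v) + norm (dg u)" by (rule norm_triangle_ineq4)
    also have "\<dots> \<le> 2 * MG" using MG(1)[OF X0S1[OF u]] MG(1)[OF X0S1[OF v]] by simp
    also have "\<dots> \<le> 2 * MG / \<epsilon>g * norm (v - u)"
    proof -
      have "1 \<le> norm (v - u) / \<epsilon>g" using False eg(1) by simp
      then have "2 * MG * 1 \<le> 2 * MG * (norm (v - u) / \<epsilon>g)" using MG(2) by (intro mult_left_mono) auto
      then show ?thesis by simp
    qed
    also have "\<dots> \<le> LG * norm (v - u)" unfolding LG_def using eg(2) by (intro mult_right_mono) auto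
    finally show ?thesis .
  qed
  have dhLip: "norm (dh1 v - dh1 u) \<le> LH * norm (v - u)" if u: "u \<in> X0" and v: "v \<in> X0" for u v
  proof (cases "norm (v - u) < \<epsilon>h")
    case True
    then have "v \<in> ball u \<epsilon>h" by (simp add: dist_norm norm_minus_commute)
    then have "dist (dh1 v) (dh1 u) \<le> Lh * dist v u" using Lhd[OF u] eh(1) by simp
    then have "norm (dh1 v - dh1 u) \<le> Lh * norm (v - u)" by (simp add: dist_norm)
    also have "\<dots> \<le> LH * norm (v - u)" unfolding LH_def using MH(2) eh(1) by (intro mult_right_mono) auto
    finally show ?thesis .
  next
    case False
    have "norm (dh1 v - dh1 u) \<le> norm (dh1 v) + norm (dh1 u)" by (rule norm_triangle_ineq4)
    also have "\<dots> \<le> 2 * MH" using MH(1)[OF X0S1[OF u]] MH(1)[OF X0S1[OF v]] by simp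
    also have "\<dots> \<le> 2 * MH / \<epsilon>h * norm (v - u)"
    proof -
      have "1 \<le> norm (v - u) / \<epsilon>h" using False eh(1) by simp
      then have "2 * MH * 1 \<le> 2 * MH * (norm (v - u) / \<epsilon>h)" using MH(2) by (intro mult_left_mono) auto
      then show ?thesis by simp
    qed
    also have "\<dots> \<le> LH * norm (v - u)" unfolding LH_def using eh(2) by (intro mult_right_mono) auto
    finally show ?thesis .
  qed
  have zB: "norm (z k) \<le> 2 * Mh" for k by (rule sgh[OF X0S1[OF xX0[of k]] z_sub[of k]])
  define \<alpha>b where "\<alpha>b = min (\<delta> / (2 * (2 * Mc * Mf / \<delta> + (MH + Mc\<^sup>2 * MG + 2 * Mh)) + 1))
                          (1 / (2 * (Mgg * Lc\<^sup>2 + Mc\<^sup>2 * Lg + Lh) + \<sigma> + 1))"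
  have \<alpha>b0: "\<alpha>b > 0"
  proof -
    define q1 where "q1 = 2 * Mc * Mf / \<delta> + (MH + Mc\<^sup>2 * MG + 2 * Mh)"
    define q2 where "q2 = Mgg * Lc\<^sup>2 + Mc\<^sup>2 * Lg + Lh"
    have "q1 \<ge> 0" unfolding q1_def using Mc0 Mf(2) \<delta>0 MH(2) MG(2) Mh(2) by simp
    moreover have "q2 \<ge> 0" unfolding q2_def using Mgg(2) Lc0 eg(2) eh(2) by simp
    ultimately show ?thesis unfolding \<alpha>b_def q1_def[symmetric] q2_def[symmetric] using \<delta>0 params(3)
      by simp
  qed
  have LS: "accept f g h1 h2 C \<sigma> (x k) (z k) xh"
    if a0: "0 < \<alpha>" and a1: "\<alpha> \<le> \<alpha>b" and xh: "xh \<in> trial_set f g C dg dh1 (c k) (x k) (z k) \<alpha>" for k \<alpha> xh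
  proof (rule ls_accept[OF f_nonneg conjunct1[OF inv[of k]] _ c_def _ _ z_sub zB _ _ _ _ m0 \<delta>0 eg(2) eh(2) Lc0 a0 _ _ params(3) xh])
    have xk: "x k \<in> X0" by (rule xX0)
    have Pk: "Pr (x k) (x k)" unfolding Pr_def using xk by simp
    show "g (x k) > 0" using X0sub[OF xk] by simp
    show "0 \<le> c k" "c k \<le> Mc" using cB[OF Pk] c_def by auto
    show "f (x k) \<le> Mf" using Mf(1)[OF S12[OF X0S1[OF xk]]] by simp
    show "norm (dh1 (x k)) \<le> MH" using MH(1)[OF X0S1[OF xk]] .
    show "norm (dg (x k)) \<le> MG" using MG(1)[OF X0S1[OF xk]] .
    show "\<alpha> \<le> \<delta> / (2 * (2 * Mc * Mf / \<delta> + (MH + Mc\<^sup>2 * MG + 2 * Mh)) + 1)" using a1 unfolding \<alpha>b_def by simp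
    show "\<alpha> \<le> 1 / (2 * (Mgg * Lc\<^sup>2 + Mc\<^sup>2 * Lg + Lh) + \<sigma> + 1)" using a1 unfolding \<alpha>b_def by simp
    fix u assume nu: "norm (u - x k) \<le> \<delta>"
    have Pu: "Pr (x k) u" unfolding Pr_def using xk nu by simp
    have "\<bar>f u / g u - f (x k) / g (x k)\<bar> \<le> Lc * norm (u - x k)" by (rule cLip[OF Pu])
    then show "m \<le> g u \<and> g u \<le> Mgg \<and> \<bar>g u - g (x k) - inner (dg (x k)) (u - x k)\<bar> \<le> Lg * (norm (u - x k))\<^sup>2
        \<and> \<bar>h1 u - h1 (x k) - inner (dh1 (x k)) (u - x k)\<bar> \<le> Lh * (norm (u - x k))\<^sup>2
        \<and> \<bar>f u / g u - c k\<bar> \<le> Lc * norm (u - x k)"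
      using Prf[OF Pu] Mgg(1)[of u] tayg[OF xk nu] tayh[OF xk nu] c_def[of k] by auto
  qed
  define \<alpha>l where "\<alpha>l = min alo (r * \<alpha>b)"
  have \<alpha>l0: "\<alpha>l > 0" unfolding \<alpha>l_def using params \<alpha>b0 by simp
  have step: "\<exists>\<alpha>. \<alpha> \<ge> \<alpha>l \<and> x (Suc k) \<in> trial_set f g C dg dh1 (c k) (x k) (z k) \<alpha>" for k
  proof -
    from iter[of k] obtain j xh where
      tr: "\<And>i. i \<le> j \<Longrightarrow> xh i \<in> trial_set f g C dg dh1 (c k) (x k) (z k) (r ^ i * atil k)"
      and rej: "\<And>i. i < j \<Longrightarrow> \<not> accept f g h1 h2 C \<sigma> (x k) (z k) (xh i)"
      and xs: "x (Suc k) = xh j"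
      unfolding alg_step_def by blast
    have at: "alo \<le> atil k" using atil_range by blast
    show ?thesis
    proof (cases j)
      case 0
      then have "x (Suc k) \<in> trial_set f g C dg dh1 (c k) (x k) (z k) (atil k)" using tr[of 0] xs by simp
      moreover have "atil k \<ge> \<alpha>l" unfolding \<alpha>l_def using at by simp
      ultimately show ?thesis by blast
    next
      case (Suc j')
      have pos: "r ^ j' * atil k > 0" using params at by simp
      have big: "r ^ j' * atil k > \<alpha>b"
      proof (rule ccontr)
        assume "\<not> r ^ j' * atil k > \<alpha>b"
        then have "accept f g h1 h2 C \<sigma> (x k) (z k) (xh j')"
          using LS[OF pos _ tr[of j']] Suc by simp
        then show False using rej[of j'] Suc by simp
      qed
      have "r ^ j * atil k = r * (r ^ j' * atil k)" using Suc by simp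
      also have "\<dots> \<ge> r * \<alpha>b" using big params by simp
      finally have "r ^ j * atil k \<ge> \<alpha>l" unfolding \<alpha>l_def by simp
      then show ?thesis using tr[of j] xs by auto
    qed
  qed
  define b where "b = 1/\<alpha>l + LH + 2*Mc*Lc*MG + Mc\<^sup>2*LG + 2*Lc*(2*Mf) + 1"
  have b0: "b > 0"
  proof -
    have "1/\<alpha>l > 0" using \<alpha>l0 by simp
    moreover have "LH + 2*Mc*Lc*MG + Mc\<^sup>2*LG + 2*Lc*(2*Mf) \<ge> 0"
      using LH0 Mc0 Lc0 MG(2) LG0 Mf(2) by simp
    ultimately show ?thesis unfolding b_def by linarith
  qed
  have partII: "\<exists>v \<in> limiting_subdiff (Hfun f g h1 h2 C) (x (Suc k), z k, c (Suc k)).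
                 norm v \<le> b * norm (x (Suc k) - x k)" for k
  proof -
    obtain \<alpha> where a: "\<alpha> \<ge> \<alpha>l" and tr: "x (Suc k) \<in> trial_set f g C dg dh1 (c k) (x k) (z k) \<alpha>"
      using step by blast
    have xk: "x k \<in> X0" and xk1: "x (Suc k) \<in> X0" by (rule xX0)+
    have P1: "Pr (x k) (x k)" "Pr (x (Suc k)) (x (Suc k))" "Pr (x k) (x (Suc k))"
      unfolding Pr_def using xk xk1 by auto
    have g1: "g (x (Suc k)) > 0" using X0sub[OF xk1] by simp
    show ?thesis unfolding b_def
    proof (rule step_bound[OF f_convex _ g_diff h1_diff C_convex conjunct1[OF inv[of k]] tr a \<alpha>l0 _ _ _ _ _ z_sub _ _ _ _ _ Lc0 LH0 LG0 MG(2)])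
      show "isCont f (x (Suc k))" using fcont by (simp add: continuous_on_eq_continuous_at)
      show "0 \<le> c k" "c k \<le> Mc" using cB[OF P1(1)] c_def by auto
      show "0 \<le> c (Suc k)" "c (Suc k) \<le> Mc" using cB[OF P1(2)] c_def by auto
      show "c (Suc k) * g (x (Suc k)) = f (x (Suc k))" using c_def g1 by simp
      show "\<bar>c (Suc k) - c k\<bar> \<le> Lc * norm (x (Suc k) - x k)" using cLip[OF P1(3)] c_def by simp
      show "norm (dh1 (x (Suc k)) - dh1 (x k)) \<le> LH * norm (x (Suc k) - x k)" by (rule dhLip[OF xk xk1])
      show "norm (dg (x (Suc k)) - dg (x k)) \<le> LG * norm (x (Suc k) - x k)" by (rule dgLip[OF xk xk1])
      show "norm (dg (x (Suc k))) \<le> MG" by (rule MG(1)[OF X0S1[OF xk1]])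
      show "\<And>s. s \<in> cvx_subdiff f (x (Suc k)) \<Longrightarrow> norm s \<le> 2 * Mf" by (rule sgf[OF X0S1[OF xk1]])
      show "0 \<le> 2 * Mf" using Mf(2) by simp
    qed
  qed
  have partII': "\<exists>b>0. \<forall>k.
            limiting_subdiff (Hfun f g h1 h2 C) (x (k + 1), z k, c (k + 1)) \<noteq> {} \<and>
            infdist 0 (limiting_subdiff (Hfun f g h1 h2 C) (x (k + 1), z k, c (k + 1)))
              \<le> b * norm (x (k + 1) - x k)"
  proof (intro exI[of _ b] conjI allI b0)
    fix k
    obtain v where v: "v \<in> limiting_subdiff (Hfun f g h1 h2 C) (x (Suc k), z k, c (Suc k))"
      and nv: "norm v \<le> b * norm (x (Suc k) - x k)" using partII by blast
    show "limiting_subdiff (Hfun f g h1 h2 C) (x (k + 1), z k, c (k + 1)) \<noteq> {}" using v by auto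
    have "infdist 0 (limiting_subdiff (Hfun f g h1 h2 C) (x (Suc k), z k, c (Suc k))) \<le> dist 0 v"
      by (rule infdist_le[OF v])
    then show "infdist 0 (limiting_subdiff (Hfun f g h1 h2 C) (x (k + 1), z k, c (k + 1))) \<le> b * norm (x (k + 1) - x k)"
      using nv by simp
  qed
  show ?thesis using partI partII' by blast
qed

end
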